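(* Let $\mathcal{H}_A,\mathcal{H}_B$ be finite-dimensional Hilbert spaces, let $|\Psi\rangle,|\Phi\rangle\in\mathcal{H}_A\otimes\mathcal{H}_B$ be unit vectors, and let $\alpha,\beta\in\mathbb{C}$ be such that $|\Gamma\rangle=\alpha|\Psi\rangle+\beta|\Phi\rangle$ is a unit vector (no condition on $|\alpha|^2+|\beta|^2$ is imposed). Then for every $t\in(0,1)$, $$E(\Gamma)\ge\max\{L_1(t),L_2(t)\},$$ where $$L_1(t)=\frac{(1-t)|\beta|^2}{1-t(1-|\alpha|^2)}E(\Phi)-\frac{1-t}{t}E(\Psi)-\frac{1}{t}h_2(t),$$ $$L_2(t)=\frac{(1-t)|\alpha|^2}{1-t(1-|\beta|^2)}E(\Psi)-\frac{1-t}{t}E(\Phi)-\frac{1}{t}h_2(t).$$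
   Context: $S(\rho)=-\mathrm{Tr}(\rho\log\rho)$ is the von Neumann entropy (logarithm base 2). For a unit vector $|\chi\rangle\in\mathcal{H}_A\otimes\mathcal{H}_B$, its entanglement is $E(\chi)=S(\mathrm{Tr}_B|\chi\rangle\langle\chi|)$. $h_2(x)=-x\log x-(1-x)\log(1-x)$ is the binary entropy function. *)

theory Defs
  imports "Jordan_Normal_Form.Char_Poly" "HOL-Computational_Algebra.Fundamental_Theorem_Algebra"
begin

(* A vector of H_A \<otimes> H_B with dim H_A = dA, dim H_B = dB is a complex vector of
   dimension dA*dB; the basis vector |i>|j> has index i*dB + j. *)

definition sq_norm_vec :: "complex vec \<Rightarrow> real" where
  "sq_norm_vec v = (\<Sum>i<dim_vec v. (cmod (v $ i))\<^sup>2)"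

definition unit_vec :: "complex vec \<Rightarrow> bool" where
  "unit_vec v \<longleftrightarrow> sq_norm_vec v = 1"

definition ket_bra :: "complex vec \<Rightarrow> complex mat" where
  "ket_bra v = mat (dim_vec v) (dim_vec v) (\<lambda>(i,j). v $ i * cnj (v $ j))"

definition partial_trace_B :: "nat \<Rightarrow> nat \<Rightarrow> complex mat \<Rightarrow> complex mat" where
  "partial_trace_B dA dB \<rho> =
     mat dA dA (\<lambda>(i,i'). \<Sum>j<dB. \<rho> $$ (i*dB + j, i'*dB + j))"

definition xlogx :: "real \<Rightarrow> real" where
  "xlogx x = (if x \<le> 0 then 0 else x * log 2 x)"

(* von Neumann entropy -Tr(rho log2 rho) = - sum over eigenvalues (with multiplicity) of
   lambda log2 lambda; for a density matrix all eigenvalues are real and nonnegative *)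
definition vn_entropy :: "complex mat \<Rightarrow> real" where
  "vn_entropy \<rho> = - (\<Sum>ev\<in>#proots (char_poly \<rho>). xlogx (Re ev))"

definition entanglement :: "nat \<Rightarrow> nat \<Rightarrow> complex vec \<Rightarrow> real" where
  "entanglement dA dB v = vn_entropy (partial_trace_B dA dB (ket_bra v))"

definition h2 :: "real \<Rightarrow> real" where
  "h2 x = - x * log 2 x - (1 - x) * log 2 (1 - x)"

end

theory Submission
  imports Defs "Jordan_Normal_Form.Schur_Decomposition"
begin


definition orth :: "nat \<Rightarrow> (nat \<Rightarrow> nat \<Rightarrow> complex) \<Rightarrow> bool" where
  "orth n u \<longleftrightarrow> (\<forall>r<n. \<forall>s<n. (\<Sum>k<n. cnj (u k r) * u k s) = (if r = s then 1 else 0))"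

definition compl :: "nat \<Rightarrow> (nat \<Rightarrow> nat \<Rightarrow> complex) \<Rightarrow> bool" where
  "compl n u \<longleftrightarrow> (\<forall>k<n. \<forall>l<n. (\<Sum>r<n. u k r * cnj (u l r)) = (if k = l then 1 else 0))"

lemma orth_compl:
  assumes "orth n u" shows "compl n u"
proof -
  define U :: "complex mat" where "U = mat n n (\<lambda>(i,j). u i j)"
  define Uh :: "complex mat" where "Uh = mat n n (\<lambda>(i,j). cnj (u j i))"
  have U: "U \<in> carrier_mat n n" and Uh: "Uh \<in> carrier_mat n n" unfolding U_def Uh_def by auto
  have "Uh * U = 1\<^sub>m n"
  proof (rule eq_matI)
    fix i j assume i: "i < dim_row (1\<^sub>m n)" and j: "j < dim_col (1\<^sub>m n)"
    hence "(Uh * U) $$ (i,j) = (\<Sum>k<n. cnj (u k i) * u k j)"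
      unfolding U_def Uh_def by (auto simp: scalar_prod_def lessThan_atLeast0 intro!: sum.cong)
    also have "\<dots> = 1\<^sub>m n $$ (i,j)" using assms i j unfolding orth_def by auto
    finally show "(Uh * U) $$ (i,j) = 1\<^sub>m n $$ (i,j)" .
  qed (auto simp: U_def Uh_def)
  hence UU: "U * Uh = 1\<^sub>m n" by (rule mat_mult_left_right_inverse[OF Uh U])
  show ?thesis unfolding compl_def
  proof (intro allI impI)
    fix k l assume k: "k < n" and l: "l < n"
    have "(\<Sum>r<n. u k r * cnj (u l r)) = (U * Uh) $$ (k,l)"
      using k l unfolding U_def Uh_def by (auto simp: scalar_prod_def lessThan_atLeast0 intro!: sum.cong)
    thus "(\<Sum>r<n. u k r * cnj (u l r)) = (if k = l then 1 else 0)" using UU k l by simp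
  qed
qed

lemma complete_unit:
  fixes x :: "nat \<Rightarrow> complex"
  assumes n: "n > 0" and x: "(\<Sum>k<n. (cmod (x k))\<^sup>2) = 1"
  shows "\<exists>w. orth n w \<and> (\<forall>k<n. w k 0 = x k)"
proof -
  define v where "v = vec n x"
  have v: "v \<in> carrier_vec n" unfolding v_def by auto
  have v0: "v \<noteq> 0\<^sub>v n"
  proof
    assume "v = 0\<^sub>v n"
    hence "\<forall>k<n. x k = 0" unfolding v_def by (metis index_vec index_zero_vec(1))
    hence "(\<Sum>k<n. (cmod (x k))\<^sup>2) = 0" by simp
    thus False using x by simp
  qed
  interpret cof_vec_space n "TYPE(complex)" .
  define b where "b = basis_completion v"
  from basis_completion[OF v v0, folded b_def]
  have dist_b: "distinct b" and indep: "\<not> lin_dep (set b)" and bc: "set b \<subseteq> carrier_vec n"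
    and hdb: "hd b = v" and len_b: "length b = n" by auto
  from hdb len_b n obtain vs where bv: "b = v # vs" by (cases b, auto)
  define ws where "ws = gram_schmidt n b"
  from gram_schmidt_result[OF bc dist_b indep refl, folded ws_def]
  have ws: "set ws \<subseteq> carrier_vec n" "corthogonal ws" "length ws = n" by (auto simp: len_b)
  from gram_schmidt_hd[OF v, of vs, folded bv] have hdws: "hd ws = v" unfolding ws_def .
  hence ws0: "ws ! 0 = v" using ws(3) n by (cases ws, auto)
  define nv where "nv = (\<lambda>w::complex vec. sqrt (\<Sum>k<n. (cmod (w $ k))\<^sup>2))"
  define w where "w = (\<lambda>k r. ws ! r $ k / complex_of_real (nv (ws ! r)))"
  have wsc: "ws ! r \<in> carrier_vec n" if "r < n" for r using ws that by (metis nth_mem subsetD)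
  have sq: "(\<Sum>k<n. a k * cnj (b' k)) = (ws ! r) \<bullet>c (ws ! s)" 
    if "r < n" "s < n" "a = (\<lambda>k. ws ! r $ k)" "b' = (\<lambda>k. ws ! s $ k)" for r s a b'
    using that wsc[of s] by (auto simp: scalar_prod_def lessThan_atLeast0 intro!: sum.cong)
  have normsq: "(\<Sum>k<n. (cmod (ws ! r $ k))\<^sup>2) > 0" if r: "r < n" for r
  proof -
    have "(ws ! r) \<bullet>c (ws ! r) \<noteq> 0" using ws r by (auto simp: corthogonal_def)
    hence "\<exists>k<n. ws ! r $ k \<noteq> 0" using sq[OF r r refl refl] by (metis (no_types, lifting) mult_zero_left sum.neutral lessThan_iff)
    then obtain k where k: "k < n" "ws ! r $ k \<noteq> 0" by auto
    have "(cmod (ws ! r $ k))\<^sup>2 \<le> (\<Sum>k<n. (cmod (ws ! r $ k))\<^sup>2)"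
      by (rule member_le_sum, insert k, auto)
    moreover have "(cmod (ws ! r $ k))\<^sup>2 > 0" using k by auto
    ultimately show ?thesis by linarith
  qed
  have orth: "orth n w" unfolding orth_def
  proof (intro allI impI)
    fix r s assume r: "r < n" and s: "s < n"
    have "(\<Sum>k<n. cnj (w k r) * w k s) = 
      (\<Sum>k<n. ws ! s $ k * cnj (ws ! r $ k)) / (complex_of_real (nv (ws ! r)) * complex_of_real (nv (ws ! s)))"
      unfolding w_def by (simp add: sum_divide_distrib algebra_simps)
    also have "(\<Sum>k<n. ws ! s $ k * cnj (ws ! r $ k)) = (ws ! s) \<bullet>c (ws ! r)" using sq[OF s r refl refl] .
    finally have eq: "(\<Sum>k<n. cnj (w k r) * w k s) = (ws ! s) \<bullet>c (ws ! r) / (complex_of_real (nv (ws ! r)) * complex_of_real (nv (ws ! s)))" .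
    show "(\<Sum>k<n. cnj (w k r) * w k s) = (if r = s then 1 else 0)"
    proof (cases "r = s")
      case False
      hence "(ws ! s) \<bullet>c (ws ! r) = 0" using ws r s by (auto simp: corthogonal_def)
      thus ?thesis using eq False by simp
    next
      case True
      define S where "S = (\<Sum>k<n. (cmod (ws ! s $ k))\<^sup>2)"
      have "(ws ! s) \<bullet>c (ws ! s) = (\<Sum>k<n. ws ! s $ k * cnj (ws ! s $ k))" using sq[OF s s refl refl] by simp
      also have "\<dots> = complex_of_real S" unfolding S_def
        by (subst of_real_sum, rule sum.cong, auto simp: complex_mult_cnj cmod_power2)
      finally have a: "(ws ! s) \<bullet>c (ws ! s) = complex_of_real S" .
      have S0: "S > 0" unfolding S_def using normsq[OF s] .
      have "complex_of_real (nv (ws ! s)) * complex_of_real (nv (ws ! s)) = complex_of_real (nv (ws ! s) * nv (ws ! s))"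
        by simp
      also have "nv (ws ! s) * nv (ws ! s) = S" unfolding nv_def S_def using S0 S_def by simp
      finally have b: "complex_of_real (nv (ws ! s)) * complex_of_real (nv (ws ! s)) = complex_of_real S" .
      have "complex_of_real S \<noteq> 0" using S0 by simp
      thus ?thesis using eq True a b by simp
    qed
  qed
  have "nv v = 1" unfolding nv_def v_def using x by simp
  hence "\<forall>k<n. w k 0 = x k" unfolding w_def ws0 v_def by simp
  with orth show ?thesis by blast
qed




definition R :: "nat \<Rightarrow> (nat \<Rightarrow> nat \<Rightarrow> complex) \<Rightarrow> nat \<Rightarrow> nat \<Rightarrow> complex" where
  "R n A = (\<lambda>i j. if i < n \<and> j < n then A i j else 0)"
definition mm :: "nat \<Rightarrow> (nat \<Rightarrow> nat \<Rightarrow> complex) \<Rightarrow> (nat \<Rightarrow> nat \<Rightarrow> complex) \<Rightarrow> nat \<Rightarrow> nat \<Rightarrow> complex" where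
  "mm n A B = (\<lambda>i j. if i < n \<and> j < n then (\<Sum>k<n. A i k * B k j) else 0)"
definition adjf :: "(nat \<Rightarrow> nat \<Rightarrow> complex) \<Rightarrow> nat \<Rightarrow> nat \<Rightarrow> complex" where
  "adjf A = (\<lambda>i j. cnj (A j i))"
definition idm :: "nat \<Rightarrow> nat \<Rightarrow> complex" where
  "idm = (\<lambda>i j. if i = j then 1 else 0)"
definition diagm :: "(nat \<Rightarrow> real) \<Rightarrow> nat \<Rightarrow> nat \<Rightarrow> complex" where
  "diagm d = (\<lambda>i j. if i = j then complex_of_real (d i) else 0)"

lemma mm_assoc: "mm n (mm n A B) C = mm n A (mm n B C)"
proof (intro ext)
  fix i j
  show "mm n (mm n A B) C i j = mm n A (mm n B C) i j"
  proof (cases "i < n \<and> j < n")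
    case True
    have "mm n (mm n A B) C i j = (\<Sum>k<n. (\<Sum>l<n. A i l * B l k) * C k j)"
      using True unfolding mm_def by (auto intro!: sum.cong)
    also have "\<dots> = (\<Sum>k<n. \<Sum>l<n. A i l * B l k * C k j)" by (simp add: sum_distrib_right)
    also have "\<dots> = (\<Sum>l<n. \<Sum>k<n. A i l * B l k * C k j)" by (rule sum.swap)
    also have "\<dots> = (\<Sum>l<n. A i l * (\<Sum>k<n. B l k * C k j))" by (simp add: sum_distrib_left mult.assoc)
    also have "\<dots> = mm n A (mm n B C) i j"
      using True unfolding mm_def by (auto intro!: sum.cong)
    finally show ?thesis .
  qed (auto simp: mm_def)
qed

lemma mm_R_left[simp]: "mm n (R n A) B = mm n A B"
  unfolding mm_def R_def by (auto intro!: ext sum.cong)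
lemma mm_R_right[simp]: "mm n A (R n B) = mm n A B"
  unfolding mm_def R_def by (auto intro!: ext sum.cong)
lemma mm_id_left[simp]: "mm n idm B = R n B"
proof -
  have "(\<Sum>k<n. (if i = k then 1 else 0) * B k j) = (\<Sum>k<n. if i = k then B k j else 0)" for i j
    by (rule sum.cong) auto
  thus ?thesis unfolding mm_def R_def idm_def by (auto intro!: ext)
qed
lemma mm_id_right[simp]: "mm n A idm = R n A"
proof -
  have "(\<Sum>k<n. A i k * (if k = j then 1 else 0)) = (\<Sum>k<n. if k = j then A i k else 0)" for i j
    by (rule sum.cong) auto
  thus ?thesis unfolding mm_def R_def idm_def by (auto intro!: ext)
qed
lemma adjf_adjf[simp]: "adjf (adjf A) = A" unfolding adjf_def by auto
lemma adjf_mm: "adjf (mm n A B) = mm n (adjf B) (adjf A)"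
  unfolding adjf_def mm_def by (auto intro!: ext sum.cong simp: mult.commute)
lemma adjf_R: "adjf (R n A) = R n (adjf A)"
  unfolding adjf_def R_def by (auto intro!: ext)
lemma R_mm[simp]: "R n (mm n A B) = mm n A B"
  unfolding R_def mm_def by (auto intro!: ext)
lemma R_R[simp]: "R n (R n A) = R n A"
  unfolding R_def by (auto intro!: ext)

lemma orth_mm: "orth n u \<longleftrightarrow> mm n (adjf u) u = R n idm"
  unfolding orth_def mm_def adjf_def R_def idm_def by (auto intro!: ext simp: fun_eq_iff)

lemma compl_mm: "compl n u \<longleftrightarrow> mm n u (adjf u) = R n idm"
  unfolding compl_def mm_def adjf_def R_def idm_def by (auto intro!: ext simp: fun_eq_iff)




lemma eigen_exists:
  fixes a :: "nat \<Rightarrow> nat \<Rightarrow> complex"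
  assumes n: "n > 0"
  shows "\<exists>e x. (\<Sum>k<n. (cmod (x k))\<^sup>2) = 1 \<and> (\<forall>k<n. (\<Sum>l<n. a k l * x l) = e * x k)"
proof -
  define A :: "complex mat" where "A = mat n n (\<lambda>(i,j). a i j)"
  have A: "A \<in> carrier_mat n n" unfolding A_def by auto
  obtain as where cp: "char_poly A = (\<Prod>a\<leftarrow>as. [:- a, 1:])" and len: "length as = n"
    using char_poly_factorized[OF A] by blast
  then obtain e rest where as: "as = e # rest" using n by (cases as, auto)
  have "poly (char_poly A) e = 0" unfolding cp as by simp
  hence "eigenvalue A e" using eigenvalue_root_char_poly[OF A] by simp
  then obtain v where ev: "eigenvector A v e" unfolding eigenvalue_def by auto
  hence v: "v \<in> carrier_vec n" and v0: "v \<noteq> 0\<^sub>v n" and Av: "A *\<^sub>v v = e \<cdot>\<^sub>v v"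
    unfolding eigenvector_def using A by auto
  define S where "S = (\<Sum>k<n. (cmod (v $ k))\<^sup>2)"
  obtain k0 where k0: "k0 < n" "v $ k0 \<noteq> 0"
  proof -
    have "\<exists>k<n. v $ k \<noteq> 0"
    proof (rule ccontr)
      assume "\<not> ?thesis"
      hence "v = 0\<^sub>v n" using v by (intro eq_vecI) auto
      thus False using v0 by simp
    qed
    thus ?thesis using that by blast
  qed
  have "(cmod (v $ k0))\<^sup>2 \<le> S" unfolding S_def by (rule member_le_sum, insert k0, auto)
  moreover have "(cmod (v $ k0))\<^sup>2 > 0" using k0 by auto
  ultimately have S0: "S > 0" by linarith
  define x where "x = (\<lambda>k. v $ k / complex_of_real (sqrt S))"
  have "(\<Sum>k<n. (cmod (x k))\<^sup>2) = (\<Sum>k<n. (cmod (v $ k))\<^sup>2 / S)"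
    unfolding x_def using S0 by (intro sum.cong) (auto simp: norm_divide power_divide)
  also have "\<dots> = S / S" unfolding S_def by (rule sum_divide_distrib[symmetric])
  also have "\<dots> = 1" using S0 by simp
  finally have x1: "(\<Sum>k<n. (cmod (x k))\<^sup>2) = 1" .
  have "(\<Sum>l<n. a k l * x l) = e * x k" if k: "k < n" for k
  proof -
    have "(A *\<^sub>v v) $ k = (\<Sum>l<n. a k l * v $ l)"
      using k v unfolding A_def by (auto simp: scalar_prod_def lessThan_atLeast0 intro!: sum.cong)
    hence "(\<Sum>l<n. a k l * v $ l) = e * v $ k" using Av k v by auto
    hence "(\<Sum>l<n. a k l * v $ l) / complex_of_real (sqrt S) = e * v $ k / complex_of_real (sqrt S)" by simp
    thus ?thesis unfolding x_def by (simp add: sum_divide_distrib)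
  qed
  with x1 show ?thesis by blast
qed

lemma mm_cancel: "mm n A B = R n idm \<Longrightarrow> mm n A (mm n B X) = R n X"
  by (metis mm_assoc mm_R_left mm_id_left)

lemma mm_diag: "i < n \<Longrightarrow> j < n \<Longrightarrow> mm n (mm n u (diagm d)) (adjf u) i j = (\<Sum>r<n. complex_of_real (d r) * u i r * cnj (u j r))"
proof -
  assume ij: "i < n" "j < n"
  have "(\<Sum>k<n. u i k * (if k = r then complex_of_real (d k) else 0)) = u i r * d r" if "r < n" for r
    using that by (simp add: if_distrib sum.delta' cong: if_cong)
  thus ?thesis using ij unfolding mm_def diagm_def adjf_def
    by (auto intro!: sum.cong simp: mult.commute mult.left_commute)
qed

lemma spectral_fun:
  "adjf (R n a) = R n a \<Longrightarrow> \<exists>u d. orth n u \<and> R n a = mm n (mm n u (diagm d)) (adjf u)"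
proof (induction n arbitrary: a)
  case 0
  show ?case by (rule exI[of _ "\<lambda>_ _. 0"], rule exI[of _ "\<lambda>_. 0"]) (auto simp: orth_def R_def mm_def intro!: ext)
next
  case (Suc m)
  let ?n = "Suc m"
  obtain e x where x1: "(\<Sum>k<?n. (cmod (x k))\<^sup>2) = 1" and ev: "\<forall>k<?n. (\<Sum>l<?n. a k l * x l) = e * x k"
    using eigen_exists[of ?n a] by auto
  obtain w where w: "orth ?n w" and w0: "\<forall>k<?n. w k 0 = x k" using complete_unit[OF _ x1] by auto
  have ww: "mm ?n (adjf w) w = R ?n idm" using w orth_mm by auto
  have ww': "mm ?n w (adjf w) = R ?n idm" using orth_compl[OF w] compl_mm by auto
  define a' where "a' = mm ?n (adjf w) (mm ?n a w)"
  have ha: "R ?n (adjf a) = R ?n a" using Suc.prems by (simp add: adjf_R)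
  have haw: "mm ?n (adjf a) w = mm ?n a w" by (metis ha mm_R_left)
  have herm': "adjf a' = a'" unfolding a'_def by (simp add: adjf_mm mm_assoc haw)
  have a'herm: "a' i j = cnj (a' j i)" for i j
    using fun_cong[OF fun_cong[OF herm', of j], of i] unfolding adjf_def by (metis complex_cnj_cnj)
  have col0: "a' i 0 = (if i = 0 then e else 0)" if i: "i < ?n" for i
  proof -
    have "a' i 0 = (\<Sum>k<?n. cnj (w k i) * (\<Sum>l<?n. a k l * w l 0))"
      unfolding a'_def mm_def adjf_def using i by (auto intro!: sum.cong)
    also have "\<dots> = (\<Sum>k<?n. cnj (w k i) * (e * w k 0))"
      using ev w0 by (auto intro!: sum.cong)
    also have "\<dots> = e * (\<Sum>k<?n. cnj (w k i) * w k 0)"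
      by (subst sum_distrib_left, rule sum.cong, auto)
    also have "\<dots> = (if i = 0 then e else 0)" using w i unfolding orth_def by auto
    finally show ?thesis .
  qed
  have "e = cnj e" using a'herm[of 0 0] col0[of 0] by simp
  hence e_real: "complex_of_real (Re e) = e" by (simp add: complex_eq_iff)
  have row0: "a' 0 j = (if j = 0 then e else 0)" if j: "j < ?n" for j
    using a'herm[of 0 j] col0[OF j] e_real by (metis complex_cnj_zero)
  define b where "b = (\<lambda>i j. a' (Suc i) (Suc j))"
  have a'herm2: "cnj (a' i j) = a' j i" for i j using a'herm[of j i] by simp
  have "adjf (R m b) = R m b" unfolding adjf_def R_def b_def using a'herm2 by (auto intro!: ext)
  from Suc.IH[OF this] obtain u' d' where u': "orth m u'" and bdec: "R m b = mm m (mm m u' (diagm d')) (adjf u')"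
    by auto
  define U' where "U' = (\<lambda>i r. if i = 0 then (if r = 0 then 1 else 0) else if r = 0 then 0 else u' (i - 1) (r - 1))"
  define d where "d = (\<lambda>r. if r = 0 then Re e else d' (r - 1))"
  have a'dec: "R ?n a' = mm ?n (mm ?n U' (diagm d)) (adjf U')"
  proof (intro ext)
    fix i j
    show "R ?n a' i j = mm ?n (mm ?n U' (diagm d)) (adjf U') i j"
    proof (cases "i < ?n \<and> j < ?n")
      case False thus ?thesis unfolding R_def mm_def by auto
    next
      case True
      hence i: "i < ?n" and j: "j < ?n" by auto
      have "mm ?n (mm ?n U' (diagm d)) (adjf U') i j = (\<Sum>r<?n. complex_of_real (d r) * U' i r * cnj (U' j r))"
        by (rule mm_diag[OF i j])
      also have "\<dots> = complex_of_real (d 0) * U' i 0 * cnj (U' j 0) + (\<Sum>r<m. complex_of_real (d (Suc r)) * U' i (Suc r) * cnj (U' j (Suc r)))"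
        by (subst sum.lessThan_Suc_shift) simp
      finally have eq: "mm ?n (mm ?n U' (diagm d)) (adjf U') i j = complex_of_real (d 0) * U' i 0 * cnj (U' j 0) + (\<Sum>r<m. complex_of_real (d (Suc r)) * U' i (Suc r) * cnj (U' j (Suc r)))" .
      show ?thesis
      proof (cases i)
        case 0
        thus ?thesis using eq row0[OF j] e_real unfolding R_def U'_def d_def using i j by auto
      next
        case (Suc i')
        show ?thesis
        proof (cases j)
          case 0
          thus ?thesis using eq col0[OF i] Suc unfolding R_def U'_def d_def using i j by auto
        next
          case (Suc j')
          have "R ?n a' i j = b i' j'" unfolding R_def b_def using i j \<open>i = Suc i'\<close> Suc by auto
          also have "\<dots> = R m b i' j'" unfolding R_def using i j \<open>i = Suc i'\<close> Suc by auto
          also have "\<dots> = (\<Sum>r<m. complex_of_real (d' r) * u' i' r * cnj (u' j' r))"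
            unfolding bdec using mm_diag i j \<open>i = Suc i'\<close> Suc by auto
          finally show ?thesis using eq \<open>i = Suc i'\<close> Suc unfolding U'_def d_def by simp
        qed
      qed
    qed
  qed
  have orthU': "orth ?n U'" unfolding orth_def
  proof (intro allI impI)
    fix r s assume r: "r < ?n" and s: "s < ?n"
    have "(\<Sum>k<?n. cnj (U' k r) * U' k s) = cnj (U' 0 r) * U' 0 s + (\<Sum>k<m. cnj (U' (Suc k) r) * U' (Suc k) s)"
      by (subst sum.lessThan_Suc_shift) simp
    also have "\<dots> = (if r = s then 1 else 0)"
    proof (cases r)
      case 0 thus ?thesis unfolding U'_def by auto
    next
      case (Suc r')
      show ?thesis
      proof (cases s)
        case 0 thus ?thesis unfolding U'_def using Suc by auto
      next
        case (Suc s')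
        thus ?thesis using u' r s \<open>r = Suc r'\<close> unfolding U'_def orth_def by auto
      qed
    qed
    finally show "(\<Sum>k<?n. cnj (U' k r) * U' k s) = (if r = s then 1 else 0)" .
  qed
  define u where "u = mm ?n w U'"
  have "mm ?n (adjf u) u = R ?n idm"
  proof -
    have "mm ?n (adjf u) u = mm ?n (adjf U') (mm ?n (adjf w) (mm ?n w U'))"
      unfolding u_def by (simp add: adjf_mm mm_assoc)
    also have "\<dots> = mm ?n (adjf U') U'" using mm_cancel[OF ww] by simp
    also have "\<dots> = R ?n idm" using orthU' orth_mm by auto
    finally show ?thesis .
  qed
  hence ou: "orth ?n u" using orth_mm by auto
  have "R ?n a = mm ?n (mm ?n w a') (adjf w)"
  proof -
    have "mm ?n (mm ?n w a') (adjf w) = mm ?n w (mm ?n (adjf w) (mm ?n a (mm ?n w (adjf w))))"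
      unfolding a'_def by (simp add: mm_assoc)
    also have "\<dots> = mm ?n w (mm ?n (adjf w) a)" unfolding ww' by simp
    also have "\<dots> = R ?n a" using mm_cancel[OF ww'] by simp
    finally show ?thesis by simp
  qed
  also have "\<dots> = mm ?n (mm ?n w (R ?n a')) (adjf w)" by simp
  also have "\<dots> = mm ?n (mm ?n u (diagm d)) (adjf u)"
    unfolding a'dec u_def by (simp add: adjf_mm mm_assoc)
  finally show ?case using ou by blast
qed




lemma proots_sum_linear:
  fixes xs :: "complex list"
  shows "(\<Sum>ev\<in>#proots (\<Prod>a\<leftarrow>xs. [:- a, 1:]). g ev) = (\<Sum>a\<leftarrow>xs. (g a :: real))"
proof (induction xs)
  case Nil thus ?case by simp
next
  case (Cons a xs)
  have nz: "(\<Prod>a\<leftarrow>xs. [:- a, 1:]) \<noteq> (0 :: complex poly)" by (auto simp: prod_list_zero_iff)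
  have p: "(\<Prod>a\<leftarrow>a # xs. [:- a, 1:]) = [:- a, 1:] * (\<Prod>a\<leftarrow>xs. [:- a, 1:])"
    by (simp only: list.map prod_list.Cons)
  have nz1: "[:- a, 1:] \<noteq> (0 :: complex poly)" by (simp only: pCons_eq_0_iff) simp
  have e1: "proots (\<Prod>a\<leftarrow>a # xs. [:- a, 1:]) = proots [:- a, 1:] + proots (\<Prod>a\<leftarrow>xs. [:- a, 1:])"
    unfolding p by (rule proots_mult[OF nz1 nz])
  have e2: "proots [:- a, 1:] = {#a#}" using proots_linear_factor[of "-a"] by (simp only: minus_minus)
  have eq: "proots (\<Prod>a\<leftarrow>a # xs. [:- a, 1:]) = {#a#} + proots (\<Prod>a\<leftarrow>xs. [:- a, 1:])"
    using e1 unfolding e2 .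
  show ?case unfolding eq by (simp only: image_mset_union image_mset_single sum_mset.union sum_mset.singleton list.map sum_list.Cons Cons.IH)
qed

lemma R_eqD: "R n f = R n g \<Longrightarrow> i < n \<Longrightarrow> j < n \<Longrightarrow> f i j = g i j"
  unfolding R_def by (drule fun_cong[of _ _ i], drule fun_cong[of _ _ j]) simp

definition entf :: "complex mat \<Rightarrow> nat \<Rightarrow> nat \<Rightarrow> complex" where
  "entf X = (\<lambda>i j. X $$ (i,j))"

lemma entf_mult: "X \<in> carrier_mat n n \<Longrightarrow> Y \<in> carrier_mat n n \<Longrightarrow> R n (entf (X * Y)) = mm n (entf X) (entf Y)"
  unfolding R_def mm_def entf_def by (auto intro!: ext sum.cong simp: scalar_prod_def lessThan_atLeast0)

lemma spectral_mat:
  fixes A :: "complex mat"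
  assumes A: "A \<in> carrier_mat n n" and herm: "\<And>i j. i < n \<Longrightarrow> j < n \<Longrightarrow> A $$ (i,j) = cnj (A $$ (j,i))"
  shows "\<exists>u d. orth n u \<and> (\<forall>i<n. \<forall>j<n. A $$ (i,j) = (\<Sum>r<n. complex_of_real (d r) * u i r * cnj (u j r)))
     \<and> vn_entropy A = - (\<Sum>r<n. xlogx (d r))"
proof -
  define a where "a = entf A"
  have herm2: "cnj (A $$ (i,j)) = A $$ (j,i)" if "i < n" "j < n" for i j using herm[OF that(2,1)] by simp
  have "adjf (R n a) = R n a" unfolding adjf_def R_def a_def entf_def using herm2 by (auto intro!: ext)
  from spectral_fun[OF this] obtain u d where u: "orth n u" and dec: "R n a = mm n (mm n u (diagm d)) (adjf u)" by auto
  have Aij: "A $$ (i,j) = (\<Sum>r<n. complex_of_real (d r) * u i r * cnj (u j r))" if "i < n" "j < n" for i j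
    using fun_cong[OF fun_cong[OF dec, of i], of j] mm_diag[OF that, of u d] that unfolding R_def a_def entf_def by simp
  define U :: "complex mat" where "U = mat n n (\<lambda>(i,j). u i j)"
  define Uh :: "complex mat" where "Uh = mat n n (\<lambda>(i,j). cnj (u j i))"
  define Dm :: "complex mat" where "Dm = mat n n (\<lambda>(i,j). if i = j then complex_of_real (d i) else 0)"
  have U: "U \<in> carrier_mat n n" and Uh: "Uh \<in> carrier_mat n n" and Dm: "Dm \<in> carrier_mat n n"
    unfolding U_def Uh_def Dm_def by auto
  have eU: "R n (entf U) = R n u" and eUh: "R n (entf Uh) = R n (adjf u)" and eD: "R n (entf Dm) = R n (diagm d)"
    unfolding U_def Uh_def Dm_def R_def entf_def adjf_def diagm_def by (auto intro!: ext)
  have "R n (entf (Uh * U)) = R n idm"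
    using entf_mult[OF Uh U] u orth_mm by (metis eU eUh mm_R_left mm_R_right)
  hence UhU: "Uh * U = 1\<^sub>m n"
    using U Uh by (intro eq_matI) (auto dest: R_eqD simp: entf_def idm_def)
  hence UUh: "U * Uh = 1\<^sub>m n" by (rule mat_mult_left_right_inverse[OF Uh U])
  have "R n (entf (U * Dm * Uh)) = mm n (mm n u (diagm d)) (adjf u)"
    using entf_mult[OF mult_carrier_mat[OF U Dm] Uh] entf_mult[OF U Dm] by (metis eU eUh eD mm_R_left mm_R_right)
  hence "R n (entf A) = R n (entf (U * Dm * Uh))" using dec unfolding a_def by simp
  hence AUDU: "A = U * Dm * Uh"
    using A U Dm Uh by (intro eq_matI) (auto dest: R_eqD simp: entf_def)
  have "similar_mat A Dm" unfolding similar_mat_def similar_mat_wit_def Let_def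
    using A U Uh Dm UhU UUh AUDU by (intro exI[of _ U] exI[of _ Uh]) auto
  hence "char_poly A = char_poly Dm" by (rule char_poly_similar)
  also have "\<dots> = (\<Prod>a\<leftarrow>diag_mat Dm. [:- a, 1:])"
    by (rule char_poly_upper_triangular[OF Dm]) (auto simp: upper_triangular_def Dm_def)
  finally have cp: "char_poly A = (\<Prod>a\<leftarrow>diag_mat Dm. [:- a, 1:])" .
  have dm: "diag_mat Dm = map (\<lambda>i. complex_of_real (d i)) [0..<n]" unfolding diag_mat_def Dm_def by auto
  have "vn_entropy A = - (\<Sum>a\<leftarrow>diag_mat Dm. xlogx (Re a))"
    unfolding vn_entropy_def cp proots_sum_linear ..
  also have "\<dots> = - (\<Sum>r<n. xlogx (d r))"
    unfolding dm by (simp add: sum_set_upt_conv_sum_list_nat[symmetric] lessThan_atLeast0 o_def)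
  finally show ?thesis using u Aij by blast
qed




lemma xlogx_nonpos: "0 \<le> x \<Longrightarrow> x \<le> 1 \<Longrightarrow> xlogx x \<le> 0"
  unfolding xlogx_def by (auto simp: mult_nonneg_nonpos)

lemma xlogx_tangent:
  assumes x: "x > 0" and y: "y \<ge> 0"
  shows "xlogx y \<ge> y * log 2 x + (y - x) / ln 2"
proof (cases "y = 0")
  case True thus ?thesis using x by (simp add: xlogx_def)
next
  case False
  hence y0: "y > 0" using y by simp
  have "ln (x / y) \<le> x / y - 1" using x y0 by (intro ln_le_minus_one) simp
  hence "y * ln (x / y) \<le> y * (x / y - 1)" using y0 by (intro mult_left_mono) auto
  hence "y * (ln x - ln y) \<le> x - y" using x y0 by (simp add: ln_div algebra_simps)
  hence "y * ln x + (y - x) \<le> y * ln y" by (simp add: algebra_simps)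
  hence "(y * ln x + (y - x)) / ln 2 \<le> y * ln y / ln 2" by (intro divide_right_mono) auto
  thus ?thesis using y0 unfolding xlogx_def log_def by (simp add: add_divide_distrib)
qed

lemma xlogx_scale:
  assumes t: "t > 0" and l: "l \<ge> 0"
  shows "xlogx (t * l) = t * xlogx l + l * xlogx t"
proof (cases "l = 0")
  case True thus ?thesis by (simp add: xlogx_def)
next
  case False
  hence lp: "l > 0" using l by simp
  hence tl: "t * l > 0" using t by simp
  have "xlogx (t * l) = t * l * log 2 (t * l)" unfolding xlogx_def using tl by simp
  also have "\<dots> = t * (l * log 2 l) + l * (t * log 2 t)" using t lp by (simp add: log_mult algebra_simps)
  also have "\<dots> = t * xlogx l + l * xlogx t" unfolding xlogx_def using t lp by simp
  finally show ?thesis .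
qed

lemma jensen_point:
  fixes D x :: "nat \<Rightarrow> real"
  assumes x: "\<forall>k<K. x k \<ge> 0" and D: "\<forall>k<K. D k \<ge> 0" and W: "(\<Sum>k<K. D k) \<le> 1"
  shows "xlogx (\<Sum>k<K. D k * x k) \<le> (\<Sum>k<K. D k * xlogx (x k))"
proof -
  define X where "X = (\<Sum>k<K. D k * x k)"
  have X0: "X \<ge> 0" unfolding X_def using x D by (intro sum_nonneg) auto
  show ?thesis
  proof (cases "X = 0")
    case True
    have "\<forall>k\<in>{..<K}. D k * x k = 0"
      using True unfolding X_def by (subst sum_nonneg_eq_0_iff[symmetric]) (use x D in auto)
    hence "\<forall>k<K. D k * xlogx (x k) = 0" by (auto simp: xlogx_def)
    hence "(\<Sum>k<K. D k * xlogx (x k)) = 0" by (intro sum.neutral) auto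
    thus ?thesis using True unfolding X_def by (simp add: xlogx_def)
  next
    case False
    hence Xp: "X > 0" using X0 by simp
    have c1: "(\<Sum>k<K. D k * xlogx (x k)) \<ge> (\<Sum>k<K. D k * (x k * log 2 X + (x k - X) / ln 2))"
      using xlogx_tangent[OF Xp] x D by (intro sum_mono mult_left_mono) auto
    have c2: "(\<Sum>k<K. D k * (x k * log 2 X + (x k - X) / ln 2)) =
        X * log 2 X + (X - (\<Sum>k<K. D k) * X) / ln 2"
    proof -
      have pt: "D k * (x k * log 2 X + (x k - X) / ln 2) = (D k * x k) * log 2 X + ((D k * x k) - D k * X) / ln 2" for k
        by (simp add: algebra_simps diff_divide_distrib add_divide_distrib)
      show ?thesis unfolding pt sum.distrib sum_divide_distrib[symmetric] sum_subtractf sum_distrib_right[symmetric]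
        by (simp add: X_def)
    qed
    have c3: "X * log 2 X + (X - (\<Sum>k<K. D k) * X) / ln 2 \<ge> X * log 2 X"
    proof -
      have "(\<Sum>k<K. D k) * X \<le> 1 * X" using W X0 by (intro mult_right_mono) auto
      thus ?thesis by (simp add: divide_nonneg_pos)
    qed
    have "X * log 2 X \<le> (\<Sum>k<K. D k * xlogx (x k))" using c1 c2 c3 by linarith
    thus ?thesis using Xp unfolding xlogx_def X_def by simp
  qed
qed

lemma jensen_xlogx:
  fixes D :: "nat \<Rightarrow> nat \<Rightarrow> real" and x :: "nat \<Rightarrow> real"
  assumes x: "\<forall>k<K. x k \<ge> 0" and D: "\<forall>r<N. \<forall>k<K. D r k \<ge> 0"
    and W: "\<forall>r<N. (\<Sum>k<K. D r k) \<le> 1" and S: "\<forall>k<K. x k \<noteq> 0 \<longrightarrow> (\<Sum>r<N. D r k) = 1"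
  shows "(\<Sum>r<N. xlogx (\<Sum>k<K. D r k * x k)) \<le> (\<Sum>k<K. xlogx (x k))"
proof -
  have "(\<Sum>r<N. xlogx (\<Sum>k<K. D r k * x k)) \<le> (\<Sum>r<N. \<Sum>k<K. D r k * xlogx (x k))"
    by (rule sum_mono, rule jensen_point) (use x D W in auto)
  also have "\<dots> = (\<Sum>k<K. (\<Sum>r<N. D r k) * xlogx (x k))"
    by (subst sum.swap) (simp add: sum_distrib_right)
  also have "\<dots> = (\<Sum>k<K. xlogx (x k))"
    by (rule sum.cong) (use S in \<open>auto simp: xlogx_def\<close>)
  finally show ?thesis .
qed

lemma ent_lower:
  assumes q: "0 \<le> q" "q \<le> 1" and d: "0 \<le> d" and r: "0 \<le> r" "r \<le> 1 - q"
  shows "xlogx (q * d + r) \<le> q * xlogx d"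
proof -
  define x where "x = q * d + r"
  have x0: "x \<ge> 0" unfolding x_def using q d r by simp
  show ?thesis
  proof (cases "x = 0")
    case True
    hence "q * d = 0" "r = 0" unfolding x_def using q d r by (auto simp: add_nonneg_eq_0_iff)
    thus ?thesis using True unfolding x_def by (auto simp: xlogx_def)
  next
    case False
    hence xp: "x > 0" using x0 by simp
    show ?thesis
    proof (cases "d = 0")
      case True
      hence "xlogx (q * d + r) = xlogx r" by simp
      also have "\<dots> \<le> 0" using r q by (intro xlogx_nonpos) auto
      finally show ?thesis using True by (simp add: xlogx_def)
    next
      case False
      hence dp: "d > 0" using d by simp
      have t: "xlogx d \<ge> d * log 2 x + (d - x) / ln 2" by (rule xlogx_tangent[OF xp d])
      have lnx: "ln x \<le> x - 1" using xp by (rule ln_le_minus_one)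
      have "r * ln x \<le> r * (x - 1)" using lnx r by (intro mult_left_mono) auto
      also have "r * (x - 1) \<le> q * (d - x)"
      proof -
        have "q * (d - x) - r * (x - 1) = x * (1 - q - r)" unfolding x_def by (simp add: algebra_simps)
        also have "\<dots> \<ge> 0" using x0 r by simp
        finally show ?thesis by simp
      qed
      finally have key: "r * ln x \<le> q * (d - x)" .
      have "x * log 2 x = q * d * log 2 x + r * ln x / ln 2" unfolding x_def log_def by (simp add: algebra_simps add_divide_distrib)
      also have "\<dots> \<le> q * d * log 2 x + q * (d - x) / ln 2" using key by (simp add: divide_right_mono)
      also have "\<dots> = q * (d * log 2 x + (d - x) / ln 2)" by (simp add: algebra_simps)
      also have "\<dots> \<le> q * xlogx d" using t q by (intro mult_left_mono) auto
      finally show ?thesis using xp unfolding xlogx_def x_def[symmetric] by simp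
    qed
  qed
qed




lemma sum_delta_mult: "k < (n::nat) \<Longrightarrow> (\<Sum>s<n. f s * (if s = k then 1 else 0)) = (f k :: complex)"
proof -
  assume k: "k < n"
  have "(\<Sum>s<n. f s * (if s = k then 1 else 0)) = (\<Sum>s<n. if s = k then f s else 0)" by (rule sum.cong) auto
  also have "\<dots> = f k" using k by (subst sum.delta) auto
  finally show ?thesis .
qed

lemma sum_delta_mult': "k < (n::nat) \<Longrightarrow> (\<Sum>s<n. (if k = s then 1 else 0) * f s) = (f k :: complex)"
proof -
  assume k: "k < n"
  have "(\<Sum>s<n. (if k = s then 1 else 0) * f s) = (\<Sum>s<n. if k = s then f s else 0)" by (rule sum.cong) auto
  also have "\<dots> = f k" using k by (subst sum.delta') auto
  finally show ?thesis .
qed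

lemma sum_swap3: "(\<Sum>k<n. \<Sum>i<n'. \<Sum>j<n''. F k i j) = (\<Sum>i<n'. \<Sum>j<n''. \<Sum>k<n. (F k i j :: complex))"
proof -
  have "(\<Sum>k<n. \<Sum>i<n'. \<Sum>j<n''. F k i j) = (\<Sum>i<n'. \<Sum>k<n. \<Sum>j<n''. F k i j)" by (rule sum.swap)
  also have "\<dots> = (\<Sum>i<n'. \<Sum>j<n''. \<Sum>k<n. F k i j)" by (rule sum.cong[OF refl], rule sum.swap)
  finally show ?thesis .
qed

lemma csq: "complex_of_real ((cmod z)\<^sup>2) = z * cnj z" by (rule complex_norm_square)

lemma eig_vec:
  assumes u: "orth n u" and A: "\<forall>i<n. \<forall>j<n. A i j = (\<Sum>s<n. complex_of_real (d s) * u i s * cnj (u j s))"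
    and i: "i < n" and r: "r < n"
  shows "(\<Sum>j<n. A i j * u j r) = complex_of_real (d r) * u i r"
proof -
  have "(\<Sum>j<n. A i j * u j r) = (\<Sum>j<n. \<Sum>s<n. complex_of_real (d s) * u i s * (cnj (u j s) * u j r))"
    using A i by (auto intro!: sum.cong simp: sum_distrib_right mult.assoc)
  also have "\<dots> = (\<Sum>s<n. complex_of_real (d s) * u i s * (\<Sum>j<n. cnj (u j s) * u j r))"
    by (subst sum.swap) (simp add: sum_distrib_left)
  also have "\<dots> = (\<Sum>s<n. complex_of_real (d s) * u i s * (if s = r then 1 else 0))"
  proof -
    have o: "s < n \<Longrightarrow> (\<Sum>j<n. cnj (u j s) * u j r) = (if s = r then 1 else 0)" for s
      using u r unfolding orth_def by auto
    show ?thesis by (intro sum.cong refl) (simp add: o)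
  qed
  also have "\<dots> = complex_of_real (d r) * u i r" by (rule sum_delta_mult[OF r])
  finally show ?thesis .
qed

lemma eig_eval:
  assumes u: "orth n u" and A: "\<forall>i<n. \<forall>j<n. A i j = (\<Sum>s<n. complex_of_real (d s) * u i s * cnj (u j s))"
    and r: "r < n"
  shows "(\<Sum>i<n. \<Sum>j<n. cnj (u i r) * A i j * u j r) = complex_of_real (d r)"
proof -
  have "(\<Sum>i<n. \<Sum>j<n. cnj (u i r) * A i j * u j r) = (\<Sum>i<n. cnj (u i r) * (\<Sum>j<n. A i j * u j r))"
    by (simp add: sum_distrib_left mult.assoc)
  also have "\<dots> = (\<Sum>i<n. complex_of_real (d r) * (cnj (u i r) * u i r))"
    using eig_vec[OF u A _ r] by (intro sum.cong) (auto simp: mult.commute mult.left_commute)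
  also have "\<dots> = complex_of_real (d r) * (\<Sum>i<n. cnj (u i r) * u i r)" by (simp add: sum_distrib_left)
  also have "(\<Sum>i<n. cnj (u i r) * u i r) = 1" using u r unfolding orth_def by auto
  finally show ?thesis by simp
qed

lemma parseval:
  fixes w :: "nat \<Rightarrow> nat \<Rightarrow> complex" and x :: "nat \<Rightarrow> complex"
  assumes w: "\<forall>i<n. \<forall>i'<n. (\<Sum>r<N. w r i * cnj (w r i')) = (if i = i' then 1 else 0)"
  shows "(\<Sum>r<N. (cmod (\<Sum>i<n. w r i * x i))\<^sup>2) = (\<Sum>i<n. (cmod (x i))\<^sup>2)"
proof -
  have "complex_of_real (\<Sum>r<N. (cmod (\<Sum>i<n. w r i * x i))\<^sup>2) = (\<Sum>r<N. (\<Sum>i<n. w r i * x i) * cnj (\<Sum>i<n. w r i * x i))"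
    unfolding of_real_sum csq ..
  also have "\<dots> = (\<Sum>r<N. \<Sum>i'<n. \<Sum>i<n. x i * cnj (x i') * (w r i * cnj (w r i')))"
    by (simp add: sum_distrib_left sum_distrib_right mult.commute mult.left_commute)
  also have "\<dots> = (\<Sum>i'<n. \<Sum>i<n. \<Sum>r<N. x i * cnj (x i') * (w r i * cnj (w r i')))"
    by (rule sum_swap3)
  also have "\<dots> = (\<Sum>i'<n. \<Sum>i<n. x i * cnj (x i') * (\<Sum>r<N. w r i * cnj (w r i')))"
    by (simp add: sum_distrib_left)
  also have "\<dots> = (\<Sum>i'<n. \<Sum>i<n. x i * cnj (x i') * (if i = i' then 1 else 0))"
    using w by (intro sum.cong refl) auto
  also have "\<dots> = (\<Sum>i<n. x i * cnj (x i))" by (intro sum.cong refl) (rule sum_delta_mult, simp)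
  also have "\<dots> = complex_of_real (\<Sum>i<n. (cmod (x i))\<^sup>2)"
    unfolding of_real_sum csq ..
  finally show ?thesis by (simp only: of_real_eq_iff)
qed

lemma trace_basis:
  assumes u: "compl n u"
  shows "(\<Sum>k<n. \<Sum>i<n. \<Sum>j<n. cnj (u i k) * A i j * u j k) = (\<Sum>i<n. A i i)"
proof -
  have "(\<Sum>k<n. \<Sum>i<n. \<Sum>j<n. cnj (u i k) * A i j * u j k) = (\<Sum>i<n. \<Sum>j<n. \<Sum>k<n. cnj (u i k) * A i j * u j k)"
    by (rule sum_swap3)
  also have "\<dots> = (\<Sum>i<n. \<Sum>j<n. \<Sum>k<n. A i j * (u j k * cnj (u i k)))"
    by (intro sum.cong refl) (simp add: algebra_simps)
  also have "\<dots> = (\<Sum>i<n. \<Sum>j<n. A i j * (\<Sum>k<n. u j k * cnj (u i k)))"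
    by (simp add: sum_distrib_left)
  also have "\<dots> = (\<Sum>i<n. \<Sum>j<n. A i j * (if j = i then 1 else 0))"
    using u unfolding compl_def by (intro sum.cong refl) auto
  also have "\<dots> = (\<Sum>i<n. A i i)" by (intro sum.cong refl) (rule sum_delta_mult, simp)
  finally show ?thesis .
qed




lemma sum_prod3: "(\<Sum>p<N. (\<Sum>i<n. a p i) * (\<Sum>j<n'. b p j)) = (\<Sum>i<n. \<Sum>j<n'. \<Sum>p<N. (a p i * b p j :: complex))"
proof -
  have "(\<Sum>p<N. (\<Sum>i<n. a p i) * (\<Sum>j<n'. b p j)) = (\<Sum>p<N. \<Sum>i<n. \<Sum>j<n'. a p i * b p j)"
    by (simp add: sum_product)
  also have "\<dots> = (\<Sum>i<n. \<Sum>j<n'. \<Sum>p<N. a p i * b p j)" by (rule sum_swap3)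
  finally show ?thesis .
qed

lemma gram_bound:
  fixes c e \<omega> :: "nat \<Rightarrow> nat \<Rightarrow> complex" and \<mu> :: "nat \<Rightarrow> real"
  assumes eo: "orth n e" and ec: "compl n e"
    and wdec: "\<forall>i<n. \<forall>j<n. \<omega> i j = (\<Sum>k<n. complex_of_real (\<mu> k) * e i k * cnj (e j k))"
    and wc: "\<forall>i<n. \<forall>j<n. \<omega> i j = (\<Sum>p<N. c p i * cnj (c p j))"
  shows "(\<Sum>p<N. xlogx (\<Sum>i<n. (cmod (c p i))\<^sup>2)) \<le> (\<Sum>k<n. xlogx (\<mu> k))"
proof -
  define G where "G = (\<lambda>p p'. \<Sum>i<n. cnj (c p i) * c p' i)"
  define Gm where "Gm = mat N N (\<lambda>(p,p'). G p p')"
  have Gm: "Gm \<in> carrier_mat N N" unfolding Gm_def by auto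
  have Gh: "Gm $$ (p,p') = cnj (Gm $$ (p',p))" if "p < N" "p' < N" for p p'
    using that unfolding Gm_def G_def by (simp add: mult.commute)
  obtain f \<gamma> where fo: "orth N f" and fdec0: "\<forall>p<N. \<forall>p'<N. Gm $$ (p,p') = (\<Sum>r<N. complex_of_real (\<gamma> r) * f p r * cnj (f p' r))"
    using spectral_mat[OF Gm Gh] by blast
  have fdec: "\<forall>p<N. \<forall>p'<N. G p p' = (\<Sum>r<N. complex_of_real (\<gamma> r) * f p r * cnj (f p' r))"
    using fdec0 unfolding Gm_def by simp
  have fc: "compl N f" by (rule orth_compl[OF fo])
  define z where "z = (\<lambda>r i. \<Sum>p<N. f p r * c p i)"
  have gam: "\<gamma> r = (\<Sum>i<n. (cmod (z r i))\<^sup>2)" if r: "r < N" for r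
  proof -
    have "complex_of_real (\<gamma> r) = (\<Sum>p<N. \<Sum>p'<N. cnj (f p r) * G p p' * f p' r)"
      using eig_eval[OF fo fdec r] by simp
    also have "\<dots> = (\<Sum>p<N. \<Sum>p'<N. \<Sum>i<n. cnj (f p r) * cnj (c p i) * (c p' i * f p' r))"
      unfolding G_def by (simp add: sum_distrib_left sum_distrib_right mult.assoc)
    also have "\<dots> = (\<Sum>i<n. \<Sum>p<N. \<Sum>p'<N. cnj (f p r) * cnj (c p i) * (c p' i * f p' r))"
      by (subst sum_swap3, subst sum_swap3) (rule refl)
    also have "\<dots> = (\<Sum>i<n. (\<Sum>p<N. cnj (f p r) * cnj (c p i)) * (\<Sum>p'<N. c p' i * f p' r))"
      by (simp add: sum_product)
    also have "\<dots> = (\<Sum>i<n. cnj (z r i) * z r i)"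
      unfolding z_def by (simp add: mult.commute)
    also have "\<dots> = complex_of_real (\<Sum>i<n. (cmod (z r i))\<^sup>2)"
      unfolding of_real_sum csq by (simp add: mult.commute)
    finally show ?thesis by (simp only: of_real_eq_iff)
  qed
  have gam0: "\<gamma> r \<ge> 0" if "r < N" for r using gam[OF that] by (simp add: sum_nonneg)
  have Gdiag: "(\<Sum>i<n. (cmod (c p i))\<^sup>2) = (\<Sum>r<N. (cmod (f p r))\<^sup>2 * \<gamma> r)" if p: "p < N" for p
  proof -
    have "complex_of_real (\<Sum>i<n. (cmod (c p i))\<^sup>2) = G p p"
      unfolding G_def of_real_sum csq by (simp add: mult.commute)
    also have "\<dots> = (\<Sum>r<N. complex_of_real (\<gamma> r) * f p r * cnj (f p r))" using fdec p by simp
    also have "\<dots> = complex_of_real (\<Sum>r<N. (cmod (f p r))\<^sup>2 * \<gamma> r)"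
      unfolding of_real_sum of_real_mult csq by (simp add: mult.commute mult.left_commute)
    finally show ?thesis by (simp only: of_real_eq_iff)
  qed
  have JA: "(\<Sum>p<N. xlogx (\<Sum>i<n. (cmod (c p i))\<^sup>2)) \<le> (\<Sum>r<N. xlogx (\<gamma> r))"
  proof -
    have rows: "(\<Sum>r<N. (cmod (f p r))\<^sup>2) = 1" if p: "p < N" for p
    proof -
      have "complex_of_real (\<Sum>r<N. (cmod (f p r))\<^sup>2) = (\<Sum>r<N. f p r * cnj (f p r))"
        unfolding of_real_sum csq ..
      also have "\<dots> = 1" using fc p unfolding compl_def by auto
      finally show ?thesis by (metis of_real_eq_1_iff)
    qed
    have cols: "(\<Sum>p<N. (cmod (f p r))\<^sup>2) = 1" if r: "r < N" for r
    proof -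
      have "complex_of_real (\<Sum>p<N. (cmod (f p r))\<^sup>2) = (\<Sum>p<N. cnj (f p r) * f p r)"
        unfolding of_real_sum csq by (simp add: mult.commute)
      also have "\<dots> = 1" using fo r unfolding orth_def by auto
      finally show ?thesis by (metis of_real_eq_1_iff)
    qed
    have "(\<Sum>p<N. xlogx (\<Sum>r<N. (cmod (f p r))\<^sup>2 * \<gamma> r)) \<le> (\<Sum>r<N. xlogx (\<gamma> r))"
      by (rule jensen_xlogx) (use gam0 rows cols in auto)
    thus ?thesis using Gdiag by simp
  qed
  define P where "P = (\<lambda>r k. \<Sum>i<n. cnj (e i k) * z r i)"
  define h where "h = (\<lambda>k p. \<Sum>i<n. cnj (e i k) * c p i)"
  have wh: "cnj (\<omega> j i) = \<omega> i j" if "i < n" "j < n" for i j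
    using wc that by (simp add: mult.commute)
  have B1: "(\<Sum>k<n. (cmod (P r k))\<^sup>2) = \<gamma> r" if r: "r < N" for r
  proof -
    have "(\<Sum>k<n. (cmod (P r k))\<^sup>2) = (\<Sum>k<n. (cmod (\<Sum>i<n. cnj (e i k) * z r i))\<^sup>2)" unfolding P_def ..
    also have "\<dots> = (\<Sum>i<n. (cmod (z r i))\<^sup>2)"
    proof (rule parseval, intro allI impI)
      fix i i' assume "i < n" "i' < n"
      thus "(\<Sum>k<n. cnj (e i k) * cnj (cnj (e i' k))) = (if i = i' then 1 else 0)"
        using ec unfolding compl_def by (auto simp: mult.commute)
    qed
    finally show ?thesis using gam[OF r] by simp
  qed
  have Ph: "P r k = (\<Sum>p<N. f p r * h k p)" for r k
  proof -
    have "P r k = (\<Sum>i<n. \<Sum>p<N. f p r * (cnj (e i k) * c p i))"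
      unfolding P_def z_def by (simp add: sum_distrib_left mult.commute mult.left_commute)
    also have "\<dots> = (\<Sum>p<N. f p r * h k p)" unfolding h_def
      by (subst sum.swap) (simp add: sum_distrib_left)
    finally show ?thesis .
  qed
  have mu_h: "(\<Sum>p<N. (cmod (h k p))\<^sup>2) = \<mu> k" if k: "k < n" for k
  proof -
    have "complex_of_real (\<Sum>p<N. (cmod (h k p))\<^sup>2) = (\<Sum>p<N. (\<Sum>i<n. cnj (e i k) * c p i) * (\<Sum>j<n. e j k * cnj (c p j)))"
      unfolding of_real_sum csq h_def by (simp add: mult.commute)
    also have "\<dots> = (\<Sum>i<n. \<Sum>j<n. \<Sum>p<N. cnj (e i k) * c p i * (e j k * cnj (c p j)))" by (rule sum_prod3)
    also have "\<dots> = (\<Sum>i<n. \<Sum>j<n. cnj (e i k) * (\<Sum>p<N. c p i * cnj (c p j)) * e j k)"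
      by (simp add: sum_distrib_left sum_distrib_right mult.commute mult.left_commute)
    also have "\<dots> = (\<Sum>i<n. \<Sum>j<n. cnj (e i k) * \<omega> i j * e j k)"
      using wc by (intro sum.cong refl) auto
    also have "\<dots> = complex_of_real (\<mu> k)" by (rule eig_eval[OF eo wdec k])
    finally show ?thesis by (simp only: of_real_eq_iff)
  qed
  have mu0: "\<mu> k \<ge> 0" if "k < n" for k using mu_h[OF that] by (metis sum_nonneg zero_le_power2)
  have B2: "(\<Sum>r<N. (cmod (P r k))\<^sup>2) = \<mu> k" if k: "k < n" for k
  proof -
    have "(\<Sum>r<N. (cmod (P r k))\<^sup>2) = (\<Sum>r<N. (cmod (\<Sum>p<N. f p r * h k p))\<^sup>2)" using Ph by simp
    also have "\<dots> = (\<Sum>p<N. (cmod (h k p))\<^sup>2)"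
      by (rule parseval) (use fc in \<open>auto simp: compl_def\<close>)
    finally show ?thesis using mu_h[OF k] by simp
  qed
  have wz: "(\<Sum>j<n. \<omega> i j * z r j) = complex_of_real (\<gamma> r) * z r i" if i: "i < n" and r: "r < N" for i r
  proof -
    have "(\<Sum>j<n. \<omega> i j * z r j) = (\<Sum>j<n. (\<Sum>p<N. c p i * cnj (c p j)) * (\<Sum>p'<N. f p' r * c p' j))"
      unfolding z_def using wc i by (intro sum.cong refl) auto
    also have "\<dots> = (\<Sum>j<n. \<Sum>p<N. \<Sum>p'<N. c p i * cnj (c p j) * (f p' r * c p' j))"
      by (simp add: sum_product)
    also have "\<dots> = (\<Sum>p<N. \<Sum>p'<N. \<Sum>j<n. c p i * cnj (c p j) * (f p' r * c p' j))"
      by (rule sum_swap3)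
    also have "\<dots> = (\<Sum>p<N. c p i * (\<Sum>p'<N. G p p' * f p' r))"
      unfolding G_def by (simp add: sum_distrib_left sum_distrib_right mult.commute mult.left_commute)
    also have "\<dots> = (\<Sum>p<N. c p i * (complex_of_real (\<gamma> r) * f p r))"
      using eig_vec[OF fo fdec _ r] by (intro sum.cong refl) auto
    also have "\<dots> = complex_of_real (\<gamma> r) * z r i"
      unfolding z_def by (simp add: sum_distrib_left mult.commute mult.left_commute)
    finally show ?thesis .
  qed
  have ew: "(\<Sum>i<n. cnj (e i k) * \<omega> i j) = complex_of_real (\<mu> k) * cnj (e j k)" if k: "k < n" and j: "j < n" for k j
  proof -
    have "(\<Sum>i<n. \<omega> j i * e i k) = complex_of_real (\<mu> k) * e j k" by (rule eig_vec[OF eo wdec j k])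
    hence "cnj (\<Sum>i<n. \<omega> j i * e i k) = complex_of_real (\<mu> k) * cnj (e j k)" by simp
    moreover have "cnj (\<Sum>i<n. \<omega> j i * e i k) = (\<Sum>i<n. cnj (e i k) * \<omega> i j)"
      using wh j by (auto intro!: sum.cong simp: mult.commute)
    ultimately show ?thesis by simp
  qed
  have B3: "(complex_of_real (\<mu> k) - complex_of_real (\<gamma> r)) * P r k = 0" if k: "k < n" and r: "r < N" for k r
  proof -
    have "(\<Sum>i<n. cnj (e i k) * (\<Sum>j<n. \<omega> i j * z r j)) = complex_of_real (\<gamma> r) * P r k"
      unfolding P_def using wz r by (simp add: sum_distrib_left mult.commute mult.left_commute)
    moreover have "(\<Sum>i<n. cnj (e i k) * (\<Sum>j<n. \<omega> i j * z r j)) = (\<Sum>j<n. (\<Sum>i<n. cnj (e i k) * \<omega> i j) * z r j)"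
    proof -
      have "(\<Sum>i<n. cnj (e i k) * (\<Sum>j<n. \<omega> i j * z r j)) = (\<Sum>i<n. \<Sum>j<n. cnj (e i k) * \<omega> i j * z r j)"
        by (simp add: sum_distrib_left mult.assoc)
      also have "\<dots> = (\<Sum>j<n. \<Sum>i<n. cnj (e i k) * \<omega> i j * z r j)" by (rule sum.swap)
      also have "\<dots> = (\<Sum>j<n. (\<Sum>i<n. cnj (e i k) * \<omega> i j) * z r j)" by (simp add: sum_distrib_right)
      finally show ?thesis .
    qed
    moreover have "\<dots> = complex_of_real (\<mu> k) * P r k"
      unfolding P_def using ew k by (simp add: sum_distrib_left mult.assoc)
    ultimately have "complex_of_real (\<gamma> r) * P r k = complex_of_real (\<mu> k) * P r k" by auto
    thus ?thesis by (auto simp: algebra_simps)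
  qed
  have Pz: "P r k = 0" if k: "k < n" and r: "r < N" and ne: "\<mu> k \<noteq> \<gamma> r" for k r
    using B3[OF k r] ne by simp
  have Pg0: "P r k = 0" if k: "k < n" and r: "r < N" and g: "\<gamma> r = 0" for k r
  proof -
    have "(\<Sum>k<n. (cmod (P r k))\<^sup>2) = 0" using B1[OF r] g by simp
    hence "\<forall>k\<in>{..<n}. (cmod (P r k))\<^sup>2 = 0" by (subst sum_nonneg_eq_0_iff[symmetric]) auto
    thus ?thesis using k by simp
  qed
  define D where "D = (\<lambda>r k. if \<mu> k = 0 then 0 else (cmod (P r k))\<^sup>2 / \<mu> k)"
  have XD: "(\<Sum>k<n. D r k * \<mu> k) = \<gamma> r" if r: "r < N" for r
  proof -
    have "(\<Sum>k<n. D r k * \<mu> k) = (\<Sum>k<n. (cmod (P r k))\<^sup>2)"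
    proof (rule sum.cong[OF refl])
      fix k assume "k \<in> {..<n}"
      hence k: "k < n" by simp
      show "D r k * \<mu> k = (cmod (P r k))\<^sup>2"
      proof (cases "\<mu> k = 0")
        case True
        have "P r k = 0"
        proof (cases "\<gamma> r = 0")
          case True thus ?thesis using Pg0[OF k r] by simp
        next
          case False thus ?thesis using Pz[OF k r] \<open>\<mu> k = 0\<close> by simp
        qed
        thus ?thesis using True unfolding D_def by simp
      qed (simp add: D_def)
    qed
    thus ?thesis using B1[OF r] by simp
  qed
  have JB: "(\<Sum>r<N. xlogx (\<Sum>k<n. D r k * \<mu> k)) \<le> (\<Sum>k<n. xlogx (\<mu> k))"
  proof (rule jensen_xlogx)
    show "\<forall>k<n. 0 \<le> \<mu> k" using mu0 by auto
    show "\<forall>r<N. \<forall>k<n. 0 \<le> D r k" unfolding D_def using mu0 by auto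
    show "\<forall>r<N. (\<Sum>k<n. D r k) \<le> 1"
    proof (intro allI impI)
      fix r assume r: "r < N"
      show "(\<Sum>k<n. D r k) \<le> 1"
      proof (cases "\<gamma> r = 0")
        case True
        hence "\<forall>k<n. D r k = 0" unfolding D_def using Pg0[OF _ r] by auto
        thus ?thesis by simp
      next
        case False
        have "(\<Sum>k<n. D r k) = (\<Sum>k<n. (cmod (P r k))\<^sup>2 / \<gamma> r)"
        proof (rule sum.cong[OF refl])
          fix k assume "k \<in> {..<n}"
          hence k: "k < n" by simp
          show "D r k = (cmod (P r k))\<^sup>2 / \<gamma> r"
          proof (cases "P r k = 0")
            case True thus ?thesis unfolding D_def by simp
          next
            case False
            hence "\<mu> k = \<gamma> r" using Pz[OF k r] by blast
            thus ?thesis unfolding D_def using \<open>\<gamma> r \<noteq> 0\<close> by simp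
          qed
        qed
        also have "\<dots> = \<gamma> r / \<gamma> r" using B1[OF r] by (simp add: sum_divide_distrib[symmetric])
        also have "\<dots> = 1" using False by simp
        finally show ?thesis by simp
      qed
    qed
    show "\<forall>k<n. \<mu> k \<noteq> 0 \<longrightarrow> (\<Sum>r<N. D r k) = 1"
    proof (intro allI impI)
      fix k assume k: "k < n" and m: "\<mu> k \<noteq> 0"
      have "(\<Sum>r<N. D r k) = (\<Sum>r<N. (cmod (P r k))\<^sup>2) / \<mu> k"
        unfolding D_def using m by (simp add: sum_divide_distrib)
      thus "(\<Sum>r<N. D r k) = 1" using B2[OF k] m by simp
    qed
  qed
  have "(\<Sum>r<N. xlogx (\<gamma> r)) \<le> (\<Sum>k<n. xlogx (\<mu> k))" using JB XD by simp
  with JA show ?thesis by linarith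
qed




lemma idx_lt: "i < n \<Longrightarrow> j < m \<Longrightarrow> i * m + j < n * (m::nat)"
proof -
  assume "i < n" "j < m"
  hence "i * m + j < i * m + m" by simp
  also have "\<dots> = Suc i * m" by simp
  also have "\<dots> \<le> n * m" using \<open>i < n\<close> by (intro mult_le_mono1) simp
  finally show ?thesis .
qed

lemma sum_lessThan_add: "(\<Sum>l<(a::nat) + (b::nat). f l) = (\<Sum>l<a. f l) + (\<Sum>j<b. f (a + j) :: 'a :: comm_monoid_add)"
  by (induction b) (simp_all add: add.assoc)

lemma sum_split_nm: "(\<Sum>i<(n::nat). \<Sum>j<(m::nat). f (i * m + j)) = (\<Sum>l<n * m. f l :: 'a :: comm_monoid_add)"
proof (induction n)
  case 0 thus ?case by simp
next
  case (Suc n)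
  have "(\<Sum>l<Suc n * m. f l) = (\<Sum>l<n * m + m. f l)" by (simp add: add.commute)
  also have "\<dots> = (\<Sum>l<n * m. f l) + (\<Sum>j<m. f (n * m + j))" by (rule sum_lessThan_add)
  finally show ?case using Suc by simp
qed

lemma rho_entry:
  assumes "dim_vec v = n * m" "i < n" "i' < n"
  shows "partial_trace_B n m (ket_bra v) $$ (i,i') = (\<Sum>j<m. v $ (i * m + j) * cnj (v $ (i' * m + j)))"
  using assms idx_lt[of i n _ m] idx_lt[of i' n _ m] unfolding partial_trace_B_def ket_bra_def
  by (auto intro!: sum.cong)

lemma rho_carrier: "partial_trace_B n m X \<in> carrier_mat n n"
  unfolding partial_trace_B_def by auto

definition Yv :: "nat \<Rightarrow> nat \<Rightarrow> complex vec \<Rightarrow> (nat \<Rightarrow> complex) \<Rightarrow> nat \<Rightarrow> complex" where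
  "Yv n m v x j = (\<Sum>i<n. cnj (x i) * v $ (i * m + j))"

lemma qform:
  assumes "dim_vec v = n * m"
  shows "(\<Sum>i<n. \<Sum>i'<n. cnj (x i) * partial_trace_B n m (ket_bra v) $$ (i,i') * y i') = (\<Sum>j<m. Yv n m v x j * cnj (Yv n m v y j))"
proof -
  have "(\<Sum>i<n. \<Sum>i'<n. cnj (x i) * partial_trace_B n m (ket_bra v) $$ (i,i') * y i') =
        (\<Sum>i<n. \<Sum>i'<n. \<Sum>j<m. cnj (x i) * v $ (i * m + j) * (cnj (v $ (i' * m + j)) * y i'))"
    using rho_entry[OF assms] by (auto intro!: sum.cong simp: sum_distrib_left sum_distrib_right mult.assoc)
  also have "\<dots> = (\<Sum>j<m. \<Sum>i<n. \<Sum>i'<n. cnj (x i) * v $ (i * m + j) * (cnj (v $ (i' * m + j)) * y i'))"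
    by (subst sum_swap3, subst sum_swap3) (rule refl)
  also have "\<dots> = (\<Sum>j<m. (\<Sum>i<n. cnj (x i) * v $ (i * m + j)) * (\<Sum>i'<n. cnj (v $ (i' * m + j)) * y i'))"
    by (simp add: sum_product)
  also have "\<dots> = (\<Sum>j<m. Yv n m v x j * cnj (Yv n m v y j))"
    unfolding Yv_def by (simp add: mult.commute)
  finally show ?thesis .
qed

lemma trace_rho:
  assumes "dim_vec v = n * m"
  shows "(\<Sum>i<n. partial_trace_B n m (ket_bra v) $$ (i,i)) = complex_of_real (sq_norm_vec v)"
proof -
  have "(\<Sum>i<n. partial_trace_B n m (ket_bra v) $$ (i,i)) = (\<Sum>i<n. \<Sum>j<m. v $ (i * m + j) * cnj (v $ (i * m + j)))"
    using rho_entry[OF assms] by (intro sum.cong refl) simp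
  also have "\<dots> = (\<Sum>l<n * m. v $ l * cnj (v $ l))" by (rule sum_split_nm)
  also have "\<dots> = complex_of_real (sq_norm_vec v)" unfolding sq_norm_vec_def assms of_real_sum csq ..
  finally show ?thesis .
qed

lemma ent_spec:
  assumes dv: "dim_vec v = n * m" and uv: "unit_vec v"
  shows "\<exists>u l. orth n u \<and> compl n u \<and>
     (\<forall>i<n. \<forall>i'<n. partial_trace_B n m (ket_bra v) $$ (i,i') = (\<Sum>r<n. complex_of_real (l r) * u i r * cnj (u i' r)))
     \<and> entanglement n m v = - (\<Sum>r<n. xlogx (l r)) \<and> (\<forall>r<n. l r \<ge> 0) \<and> (\<Sum>r<n. l r) = 1"
proof -
  let ?A = "partial_trace_B n m (ket_bra v)"
  have herm: "?A $$ (i,j) = cnj (?A $$ (j,i))" if "i < n" "j < n" for i j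
    using rho_entry[OF dv that] rho_entry[OF dv that(2,1)] by (simp add: mult.commute)
  obtain u l where u: "orth n u" and dec: "\<forall>i<n. \<forall>j<n. ?A $$ (i,j) = (\<Sum>r<n. complex_of_real (l r) * u i r * cnj (u j r))"
    and ent: "vn_entropy ?A = - (\<Sum>r<n. xlogx (l r))"
    using spectral_mat[OF rho_carrier herm] by blast
  have uc: "compl n u" by (rule orth_compl[OF u])
  have lq: "complex_of_real (l r) = complex_of_real (\<Sum>j<m. (cmod (Yv n m v (\<lambda>i. u i r) j))\<^sup>2)" if r: "r < n" for r
    unfolding of_real_sum csq using eig_eval[OF u dec r] qform[OF dv, of "\<lambda>i. u i r" "\<lambda>i. u i r"] by simp
  have l0: "l r \<ge> 0" if "r < n" for r
  proof -
    have "l r = (\<Sum>j<m. (cmod (Yv n m v (\<lambda>i. u i r) j))\<^sup>2)" using lq[OF that] by (simp only: of_real_eq_iff)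
    thus ?thesis by (simp add: sum_nonneg)
  qed
  have "complex_of_real (\<Sum>r<n. l r) = (\<Sum>r<n. \<Sum>i<n. \<Sum>j<n. cnj (u i r) * ?A $$ (i,j) * u j r)"
    unfolding of_real_sum using eig_eval[OF u dec] by simp
  also have "\<dots> = (\<Sum>i<n. ?A $$ (i,i))" by (rule trace_basis[OF uc])
  also have "\<dots> = 1" using trace_rho[OF dv] uv unfolding unit_vec_def by simp
  finally have "(\<Sum>r<n. l r) = 1" by (metis of_real_eq_1_iff)
  thus ?thesis using u uc dec ent l0 unfolding entanglement_def by blast
qed

lemma pt_real:
  fixes t A x y :: real
  assumes t: "0 < t" "t < 1" and A: "A > 0"
  shows "t * (1 - t) * (x + y)\<^sup>2 \<le> (1 - t + t * A) * (t * x\<^sup>2 + (1 - t) * y\<^sup>2 / A)"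
proof -
  have "A * ((1 - t + t * A) * (t * x\<^sup>2 + (1 - t) * y\<^sup>2 / A) - t * (1 - t) * (x + y)\<^sup>2) = ((1 - t) * y - t * A * x)\<^sup>2"
    using A by (simp add: field_simps power2_eq_square)
  hence "A * ((1 - t + t * A) * (t * x\<^sup>2 + (1 - t) * y\<^sup>2 / A) - t * (1 - t) * (x + y)\<^sup>2) \<ge> 0" by simp
  hence "(1 - t + t * A) * (t * x\<^sup>2 + (1 - t) * y\<^sup>2 / A) - t * (1 - t) * (x + y)\<^sup>2 \<ge> 0"
    using A by (simp add: zero_le_mult_iff)
  thus ?thesis by simp
qed

lemma pt_ineq:
  fixes \<alpha> \<beta> a b g :: complex and t :: real
  assumes t: "0 < t" "t < 1" and g: "g = \<alpha> * a + \<beta> * b"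
  shows "t * (1 - t) / (1 - t * (1 - (cmod \<alpha>)\<^sup>2)) * (cmod \<beta>)\<^sup>2 * (cmod b)\<^sup>2 \<le> t * (cmod g)\<^sup>2 + (1 - t) * (cmod a)\<^sup>2"
proof (cases "\<alpha> = 0")
  case True
  hence "g = \<beta> * b" using g by simp
  hence "(cmod g)\<^sup>2 = (cmod \<beta>)\<^sup>2 * (cmod b)\<^sup>2" by (simp add: norm_mult power_mult_distrib)
  moreover have "t * (1 - t) / (1 - t * (1 - (cmod \<alpha>)\<^sup>2)) = t" using True t by simp
  ultimately show ?thesis using t by simp
next
  case False
  define A where "A = (cmod \<alpha>)\<^sup>2"
  have A: "A > 0" unfolding A_def using False by simp
  define x where "x = cmod g"
  define y where "y = cmod \<alpha> * cmod a"
  have "cmod (\<beta> * b) = cmod (g - \<alpha> * a)" using g by simp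
  also have "\<dots> \<le> x + y" unfolding x_def y_def by (metis norm_mult norm_triangle_ineq4)
  finally have "cmod \<beta> * cmod b \<le> x + y" by (simp add: norm_mult)
  hence "(cmod \<beta> * cmod b)\<^sup>2 \<le> (x + y)\<^sup>2" by (intro power_mono) auto
  hence bb: "(cmod \<beta>)\<^sup>2 * (cmod b)\<^sup>2 \<le> (x + y)\<^sup>2" by (simp add: power_mult_distrib)
  have D: "1 - t * (1 - A) = 1 - t + t * A" by (simp add: algebra_simps)
  have Dp: "1 - t + t * A > 0" using t A by (simp add: add_pos_nonneg)
  have aa: "(cmod a)\<^sup>2 = y\<^sup>2 / A" unfolding y_def A_def using False by (simp add: power_mult_distrib)
  have "t * (1 - t) / (1 - t * (1 - A)) * ((cmod \<beta>)\<^sup>2 * (cmod b)\<^sup>2) \<le> t * (1 - t) / (1 - t + t * A) * (x + y)\<^sup>2"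
    unfolding D using bb t Dp by (intro mult_left_mono) auto
  also have "\<dots> \<le> t * x\<^sup>2 + (1 - t) * y\<^sup>2 / A"
    using pt_real[OF t A, of x y] Dp by (simp add: divide_le_eq mult.commute)
  finally show ?thesis unfolding A_def aa x_def by (simp add: mult.assoc)
qed




lemma rhoh: "dim_vec v = n * m \<Longrightarrow> i < n \<Longrightarrow> j < n \<Longrightarrow>
   cnj (partial_trace_B n m (ket_bra v) $$ (j,i)) = partial_trace_B n m (ket_bra v) $$ (i,j)"
  by (simp add: rho_entry mult.commute)

lemma col_norm: "orth n u \<Longrightarrow> r < n \<Longrightarrow> (\<Sum>i<n. (cmod (u i r))\<^sup>2) = 1"
proof -
  assume u: "orth n u" and r: "r < n"
  have "complex_of_real (\<Sum>i<n. (cmod (u i r))\<^sup>2) = (\<Sum>i<n. cnj (u i r) * u i r)"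
    unfolding of_real_sum csq by (simp add: mult.commute)
  also have "\<dots> = 1" using u r unfolding orth_def by auto
  finally show ?thesis by (metis of_real_eq_1_iff)
qed

lemma sqrt_cnj: "x \<ge> 0 \<Longrightarrow> complex_of_real (sqrt x) * a * cnj (complex_of_real (sqrt x) * b) = complex_of_real x * a * cnj b"
proof -
  assume x: "x \<ge> 0"
  have s: "complex_of_real (sqrt x) * complex_of_real (sqrt x) = complex_of_real x"
    using x by (metis of_real_mult real_sqrt_mult_self abs_of_nonneg)
  have c: "cnj (complex_of_real (sqrt x) * b) = complex_of_real (sqrt x) * cnj b" by simp
  have "complex_of_real (sqrt x) * a * cnj (complex_of_real (sqrt x) * b) = (complex_of_real (sqrt x) * complex_of_real (sqrt x)) * a * cnj b"
    unfolding c by (simp only: mult.assoc mult.left_commute)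
  thus ?thesis unfolding s .
qed

lemma main_L1:
  fixes n m :: nat and \<Psi> \<Phi> :: "complex vec" and \<alpha> \<beta> :: complex and t :: real
  assumes dP: "dim_vec \<Psi> = n * m" and dF: "dim_vec \<Phi> = n * m"
    and uP: "unit_vec \<Psi>" and uF: "unit_vec \<Phi>" and uG: "unit_vec (\<alpha> \<cdot>\<^sub>v \<Psi> + \<beta> \<cdot>\<^sub>v \<Phi>)"
    and t: "0 < t" "t < 1"
  shows "entanglement n m (\<alpha> \<cdot>\<^sub>v \<Psi> + \<beta> \<cdot>\<^sub>v \<Phi>) \<ge>
     (1 - t) * (cmod \<beta>)\<^sup>2 / (1 - t * (1 - (cmod \<alpha>)\<^sup>2)) * entanglement n m \<Phi>
           - (1 - t) / t * entanglement n m \<Psi> - 1 / t * h2 t"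
proof -
  define \<Gamma> where "\<Gamma> = \<alpha> \<cdot>\<^sub>v \<Psi> + \<beta> \<cdot>\<^sub>v \<Phi>"
  have dG: "dim_vec \<Gamma> = n * m" unfolding \<Gamma>_def using dP dF by simp
  have Gidx: "\<Gamma> $ l = \<alpha> * \<Psi> $ l + \<beta> * \<Phi> $ l" if "l < n * m" for l
    using that dP dF unfolding \<Gamma>_def by simp
  have uG': "unit_vec \<Gamma>" unfolding \<Gamma>_def by (rule uG)
  define rG where "rG = partial_trace_B n m (ket_bra \<Gamma>)"
  define rP where "rP = partial_trace_B n m (ket_bra \<Psi>)"
  define rF where "rF = partial_trace_B n m (ket_bra \<Phi>)"
  obtain uGv lG where uGo: "orth n uGv" and uGc: "compl n uGv"
    and decG: "\<forall>i<n. \<forall>i'<n. rG $$ (i,i') = (\<Sum>r<n. complex_of_real (lG r) * uGv i r * cnj (uGv i' r))"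
    and EG: "entanglement n m \<Gamma> = - (\<Sum>r<n. xlogx (lG r))" and lG0: "\<forall>r<n. lG r \<ge> 0" and lG1: "(\<Sum>r<n. lG r) = 1"
    using ent_spec[OF dG uG'] unfolding rG_def by blast
  obtain uPv lP where uPo: "orth n uPv" and uPc: "compl n uPv"
    and decP: "\<forall>i<n. \<forall>i'<n. rP $$ (i,i') = (\<Sum>r<n. complex_of_real (lP r) * uPv i r * cnj (uPv i' r))"
    and EP: "entanglement n m \<Psi> = - (\<Sum>r<n. xlogx (lP r))" and lP0: "\<forall>r<n. lP r \<ge> 0" and lP1: "(\<Sum>r<n. lP r) = 1"
    using ent_spec[OF dP uP] unfolding rP_def by blast
  obtain uFv lF where uFo: "orth n uFv" and uFc: "compl n uFv"
    and decF: "\<forall>i<n. \<forall>i'<n. rF $$ (i,i') = (\<Sum>r<n. complex_of_real (lF r) * uFv i r * cnj (uFv i' r))"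
    and EF: "entanglement n m \<Phi> = - (\<Sum>r<n. xlogx (lF r))" and lF0: "\<forall>r<n. lF r \<ge> 0" and lF1: "(\<Sum>r<n. lF r) = 1"
    using ent_spec[OF dF uF] unfolding rF_def by blast
  define \<omega> where "\<omega> = (\<lambda>i j. complex_of_real t * rG $$ (i,j) + complex_of_real (1 - t) * rP $$ (i,j))"
  define \<omega>m where "\<omega>m = mat n n (\<lambda>(i,j). \<omega> i j)"
  have \<omega>m: "\<omega>m \<in> carrier_mat n n" unfolding \<omega>m_def by simp
  have \<omega>h: "\<omega>m $$ (i,j) = cnj (\<omega>m $$ (j,i))" if "i < n" "j < n" for i j
    using that rhoh[OF dG that] rhoh[OF dP that] unfolding \<omega>m_def \<omega>_def rG_def rP_def by simp
  obtain e \<mu> where eo: "orth n e" and edec0: "\<forall>i<n. \<forall>j<n. \<omega>m $$ (i,j) = (\<Sum>k<n. complex_of_real (\<mu> k) * e i k * cnj (e j k))"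
    using spectral_mat[OF \<omega>m \<omega>h] by blast
  have ec: "compl n e" by (rule orth_compl[OF eo])
  have edec: "\<forall>i<n. \<forall>j<n. \<omega> i j = (\<Sum>k<n. complex_of_real (\<mu> k) * e i k * cnj (e j k))"
    using edec0 unfolding \<omega>m_def by simp
  define c where "c = (\<lambda>p i. if p < n then complex_of_real (sqrt (t * lG p)) * uGv i p
                         else complex_of_real (sqrt ((1 - t) * lP (p - n))) * uPv i (p - n))"
  have wc: "\<forall>i<n. \<forall>j<n. \<omega> i j = (\<Sum>p<n + n. c p i * cnj (c p j))"
  proof (intro allI impI)
    fix i j assume i: "i < n" and j: "j < n"
    have "(\<Sum>p<n + n. c p i * cnj (c p j)) = (\<Sum>p<n. c p i * cnj (c p j)) + (\<Sum>q<n. c (n + q) i * cnj (c (n + q) j))"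
      by (rule sum_lessThan_add)
    also have "(\<Sum>p<n. c p i * cnj (c p j)) = (\<Sum>p<n. complex_of_real t * (complex_of_real (lG p) * uGv i p * cnj (uGv j p)))"
    proof (rule sum.cong[OF refl])
      fix p assume "p \<in> {..<n}"
      hence p: "p < n" by simp
      have "c p i * cnj (c p j) = complex_of_real (sqrt (t * lG p)) * uGv i p * cnj (complex_of_real (sqrt (t * lG p)) * uGv j p)"
        using p by (simp only: c_def if_P[OF p] if_True)
      also have "\<dots> = complex_of_real (t * lG p) * uGv i p * cnj (uGv j p)"
        by (rule sqrt_cnj) (use lG0 t p in simp)
      finally show "c p i * cnj (c p j) = complex_of_real t * (complex_of_real (lG p) * uGv i p * cnj (uGv j p))"
        by simp
    qed
    also have "\<dots> = complex_of_real t * rG $$ (i,j)" using decG i j by (simp add: sum_distrib_left)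
    also have "(\<Sum>q<n. c (n + q) i * cnj (c (n + q) j)) = (\<Sum>q<n. complex_of_real (1 - t) * (complex_of_real (lP q) * uPv i q * cnj (uPv j q)))"
    proof (rule sum.cong[OF refl])
      fix q assume "q \<in> {..<n}"
      hence q: "q < n" by simp
      have nq: "\<not> n + q < n" by simp
      have "c (n + q) i * cnj (c (n + q) j) = complex_of_real (sqrt ((1 - t) * lP q)) * uPv i q * cnj (complex_of_real (sqrt ((1 - t) * lP q)) * uPv j q)"
        by (simp only: c_def if_not_P[OF nq] add_diff_cancel_left')
      also have "\<dots> = complex_of_real ((1 - t) * lP q) * uPv i q * cnj (uPv j q)"
        by (rule sqrt_cnj) (use lP0 t q in simp)
      finally show "c (n + q) i * cnj (c (n + q) j) = complex_of_real (1 - t) * (complex_of_real (lP q) * uPv i q * cnj (uPv j q))"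
        by simp
    qed
    also have "\<dots> = complex_of_real (1 - t) * rP $$ (i,j)" using decP i j by (simp add: sum_distrib_left)
    finally show "\<omega> i j = (\<Sum>p<n + n. c p i * cnj (c p j))" unfolding \<omega>_def by simp
  qed
  have GB: "(\<Sum>p<n + n. xlogx (\<Sum>i<n. (cmod (c p i))\<^sup>2)) \<le> (\<Sum>k<n. xlogx (\<mu> k))"
    by (rule gram_bound[OF eo ec edec wc])
  have cn1: "(\<Sum>i<n. (cmod (c p i))\<^sup>2) = t * lG p" if p: "p < n" for p
  proof -
    have "(\<Sum>i<n. (cmod (c p i))\<^sup>2) = (\<Sum>i<n. t * lG p * (cmod (uGv i p))\<^sup>2)"
      unfolding c_def using p lG0 t by (intro sum.cong refl) (simp add: norm_mult power_mult_distrib)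
    also have "\<dots> = t * lG p" using col_norm[OF uGo p] by (simp add: sum_distrib_left[symmetric])
    finally show ?thesis .
  qed
  have cn2: "(\<Sum>i<n. (cmod (c (n + q) i))\<^sup>2) = (1 - t) * lP q" if q: "q < n" for q
  proof -
    have "(\<Sum>i<n. (cmod (c (n + q) i))\<^sup>2) = (\<Sum>i<n. (1 - t) * lP q * (cmod (uPv i q))\<^sup>2)"
      unfolding c_def using q lP0 t by (intro sum.cong refl) (simp add: norm_mult power_mult_distrib)
    also have "\<dots> = (1 - t) * lP q" using col_norm[OF uPo q] by (simp add: sum_distrib_left[symmetric])
    finally show ?thesis .
  qed
  have "(\<Sum>p<n + n. xlogx (\<Sum>i<n. (cmod (c p i))\<^sup>2)) = (\<Sum>p<n. xlogx (t * lG p)) + (\<Sum>q<n. xlogx ((1 - t) * lP q))"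
    by (subst sum_lessThan_add) (simp add: cn1 cn2)
  also have "(\<Sum>p<n. xlogx (t * lG p)) = t * (\<Sum>p<n. xlogx (lG p)) + xlogx t"
  proof -
    have "(\<Sum>p<n. xlogx (t * lG p)) = (\<Sum>p<n. t * xlogx (lG p) + lG p * xlogx t)"
      using lG0 t by (intro sum.cong refl xlogx_scale) auto
    also have "\<dots> = t * (\<Sum>p<n. xlogx (lG p)) + (\<Sum>p<n. lG p) * xlogx t"
      by (simp add: sum.distrib sum_distrib_left sum_distrib_right)
    finally show ?thesis using lG1 by simp
  qed
  also have "(\<Sum>q<n. xlogx ((1 - t) * lP q)) = (1 - t) * (\<Sum>p<n. xlogx (lP p)) + xlogx (1 - t)"
  proof -
    have "(\<Sum>p<n. xlogx ((1 - t) * lP p)) = (\<Sum>p<n. (1 - t) * xlogx (lP p) + lP p * xlogx (1 - t))"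
      using lP0 t by (intro sum.cong refl xlogx_scale) auto
    also have "\<dots> = (1 - t) * (\<Sum>p<n. xlogx (lP p)) + (\<Sum>p<n. lP p) * xlogx (1 - t)"
      by (simp add: sum.distrib sum_distrib_left sum_distrib_right)
    finally show ?thesis using lP1 by simp
  qed
  finally have UB: "t * (\<Sum>p<n. xlogx (lG p)) + xlogx t + ((1 - t) * (\<Sum>p<n. xlogx (lP p)) + xlogx (1 - t)) \<le> (\<Sum>k<n. xlogx (\<mu> k))"
    using GB by simp
  define q where "q = t * (1 - t) / (1 - t * (1 - (cmod \<alpha>)\<^sup>2)) * (cmod \<beta>)\<^sup>2"
  have den: "1 - t * (1 - (cmod \<alpha>)\<^sup>2) > 0"
  proof -
    have "1 - t * (1 - (cmod \<alpha>)\<^sup>2) = (1 - t) + t * (cmod \<alpha>)\<^sup>2" by (simp add: algebra_simps)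
    also have "\<dots> > 0" using t by (simp add: add_pos_nonneg)
    finally show ?thesis .
  qed
  have q0: "q \<ge> 0" unfolding q_def using t den by simp
  define d where "d = (\<lambda>k. \<Sum>j<m. (cmod (Yv n m \<Phi> (\<lambda>i. e i k) j))\<^sup>2)"
  have Ylin: "Yv n m \<Gamma> x j = \<alpha> * Yv n m \<Psi> x j + \<beta> * Yv n m \<Phi> x j" if j: "j < m" for x j
  proof -
    have "Yv n m \<Gamma> x j = (\<Sum>i<n. cnj (x i) * (\<alpha> * \<Psi> $ (i * m + j) + \<beta> * \<Phi> $ (i * m + j)))"
      unfolding Yv_def by (rule sum.cong[OF refl]) (simp add: Gidx idx_lt j)
    also have "\<dots> = \<alpha> * Yv n m \<Psi> x j + \<beta> * Yv n m \<Phi> x j"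
      unfolding Yv_def by (simp add: sum_distrib_left sum.distrib algebra_simps)
    finally show ?thesis .
  qed
  have muY: "\<mu> k = t * (\<Sum>j<m. (cmod (Yv n m \<Gamma> (\<lambda>i. e i k) j))\<^sup>2) + (1 - t) * (\<Sum>j<m. (cmod (Yv n m \<Psi> (\<lambda>i. e i k) j))\<^sup>2)"
    if k: "k < n" for k
  proof -
    have "complex_of_real (\<mu> k) = (\<Sum>i<n. \<Sum>j<n. cnj (e i k) * \<omega> i j * e j k)"
      using eig_eval[OF eo edec k] by simp
    also have "\<dots> = (\<Sum>i<n. \<Sum>j<n. complex_of_real t * (cnj (e i k) * rG $$ (i,j) * e j k)
                  + complex_of_real (1 - t) * (cnj (e i k) * rP $$ (i,j) * e j k))"
      unfolding \<omega>_def by (intro sum.cong refl) (simp add: algebra_simps)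
    also have "\<dots> = complex_of_real t * (\<Sum>i<n. \<Sum>j<n. cnj (e i k) * rG $$ (i,j) * e j k)
                  + complex_of_real (1 - t) * (\<Sum>i<n. \<Sum>j<n. cnj (e i k) * rP $$ (i,j) * e j k)"
      by (simp only: sum.distrib sum_distrib_left)
    also have "\<dots> = complex_of_real (t * (\<Sum>j<m. (cmod (Yv n m \<Gamma> (\<lambda>i. e i k) j))\<^sup>2) + (1 - t) * (\<Sum>j<m. (cmod (Yv n m \<Psi> (\<lambda>i. e i k) j))\<^sup>2))"
      unfolding rG_def rP_def qform[OF dG] qform[OF dP] of_real_add of_real_mult of_real_sum csq ..
    finally show ?thesis by (simp only: of_real_eq_iff)
  qed
  have d0: "d k \<ge> 0" for k unfolding d_def by (simp add: sum_nonneg)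
  have mu_ge: "\<mu> k \<ge> q * d k" if k: "k < n" for k
  proof -
    have "q * d k = (\<Sum>j<m. t * (1 - t) / (1 - t * (1 - (cmod \<alpha>)\<^sup>2)) * (cmod \<beta>)\<^sup>2 * (cmod (Yv n m \<Phi> (\<lambda>i. e i k) j))\<^sup>2)"
      unfolding q_def d_def by (simp add: sum_distrib_left)
    also have "\<dots> \<le> (\<Sum>j<m. t * (cmod (Yv n m \<Gamma> (\<lambda>i. e i k) j))\<^sup>2 + (1 - t) * (cmod (Yv n m \<Psi> (\<lambda>i. e i k) j))\<^sup>2)"
      by (rule sum_mono, rule pt_ineq[OF t], rule Ylin) simp
    also have "\<dots> = \<mu> k" using muY[OF k] by (simp add: sum.distrib sum_distrib_left)
    finally show ?thesis .
  qed
  have mu0: "\<mu> k \<ge> 0" if "k < n" for k using mu_ge[OF that] q0 d0[of k] by (meson mult_nonneg_nonneg order_trans)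
  have mu1: "(\<Sum>k<n. \<mu> k) = 1"
  proof -
    have "complex_of_real (\<Sum>k<n. \<mu> k) = (\<Sum>k<n. \<Sum>i<n. \<Sum>j<n. cnj (e i k) * \<omega> i j * e j k)"
      unfolding of_real_sum using eig_eval[OF eo edec] by simp
    also have "\<dots> = (\<Sum>i<n. \<omega> i i)" by (rule trace_basis[OF ec])
    also have "\<dots> = complex_of_real t * (\<Sum>i<n. rG $$ (i,i)) + complex_of_real (1 - t) * (\<Sum>i<n. rP $$ (i,i))"
      unfolding \<omega>_def by (simp add: sum.distrib sum_distrib_left)
    also have "\<dots> = 1" unfolding rG_def rP_def trace_rho[OF dG] trace_rho[OF dP]
      using uG' uP unfolding unit_vec_def by simp
    finally show ?thesis by (metis of_real_eq_1_iff)
  qed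
  have d1: "(\<Sum>k<n. d k) = 1"
  proof -
    have "complex_of_real (\<Sum>k<n. d k) = (\<Sum>k<n. \<Sum>i<n. \<Sum>j<n. cnj (e i k) * rF $$ (i,j) * e j k)"
      unfolding d_def of_real_sum csq rF_def qform[OF dF] ..
    also have "\<dots> = (\<Sum>i<n. rF $$ (i,i))" by (rule trace_basis[OF ec])
    also have "\<dots> = 1" unfolding rF_def trace_rho[OF dF] using uF unfolding unit_vec_def by simp
    finally show ?thesis by (metis of_real_eq_1_iff)
  qed
  have q1: "q \<le> 1"
  proof -
    have "(\<Sum>k<n. q * d k) \<le> (\<Sum>k<n. \<mu> k)" by (rule sum_mono) (use mu_ge in auto)
    thus ?thesis using mu1 d1 by (simp add: sum_distrib_left[symmetric])
  qed
  have rsum: "(\<Sum>k<n. \<mu> k - q * d k) = 1 - q" using mu1 d1 by (simp add: sum_subtractf sum_distrib_left[symmetric])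
  have LB1: "(\<Sum>k<n. xlogx (\<mu> k)) \<le> q * (\<Sum>k<n. xlogx (d k))"
  proof -
    have "(\<Sum>k<n. xlogx (\<mu> k)) \<le> (\<Sum>k<n. q * xlogx (d k))"
    proof (rule sum_mono)
      fix k assume "k \<in> {..<n}"
      hence k: "k < n" by simp
      have r0: "\<mu> k - q * d k \<ge> 0" using mu_ge[OF k] by simp
      have "\<mu> k - q * d k \<le> (\<Sum>k<n. \<mu> k - q * d k)"
        by (rule member_le_sum) (use k mu_ge in auto)
      hence r1: "\<mu> k - q * d k \<le> 1 - q" using rsum by simp
      have "xlogx (q * d k + (\<mu> k - q * d k)) \<le> q * xlogx (d k)"
        by (rule ent_lower[OF q0 q1 d0 r0 r1])
      thus "xlogx (\<mu> k) \<le> q * xlogx (d k)" by simp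
    qed
    thus ?thesis by (simp add: sum_distrib_left)
  qed
  define D where "D = (\<lambda>k r. (cmod (\<Sum>i<n. cnj (e i k) * uFv i r))\<^sup>2)"
  have dD: "d k = (\<Sum>r<n. D k r * lF r)" if k: "k < n" for k
  proof -
    have "complex_of_real (d k) = (\<Sum>i<n. \<Sum>j<n. cnj (e i k) * rF $$ (i,j) * e j k)"
      unfolding d_def of_real_sum csq rF_def qform[OF dF] ..
    also have "\<dots> = (\<Sum>i<n. \<Sum>j<n. \<Sum>r<n. complex_of_real (lF r) * (cnj (e i k) * uFv i r) * (cnj (uFv j r) * e j k))"
      using decF by (auto intro!: sum.cong simp: sum_distrib_left sum_distrib_right mult.commute mult.left_commute)
    also have "\<dots> = (\<Sum>r<n. \<Sum>i<n. \<Sum>j<n. complex_of_real (lF r) * (cnj (e i k) * uFv i r) * (cnj (uFv j r) * e j k))"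
      by (subst sum_swap3, subst sum_swap3) (rule refl)
    also have "\<dots> = (\<Sum>r<n. complex_of_real (lF r) * ((\<Sum>i<n. cnj (e i k) * uFv i r) * cnj (\<Sum>i<n. cnj (e i k) * uFv i r)))"
      by (simp add: sum_product sum_distrib_left mult.commute mult.left_commute)
    also have "\<dots> = complex_of_real (\<Sum>r<n. D k r * lF r)"
      unfolding D_def of_real_sum of_real_mult csq by (simp add: mult.commute)
    finally show ?thesis by (simp only: of_real_eq_iff)
  qed
  have Drow: "(\<Sum>r<n. D k r) = 1" if k: "k < n" for k
  proof -
    have "(\<Sum>r<n. D k r) = (\<Sum>r<n. (cmod (\<Sum>i<n. cnj (uFv i r) * e i k))\<^sup>2)"
    proof (rule sum.cong[OF refl])
      fix r
      have "cnj (\<Sum>i<n. cnj (e i k) * uFv i r) = (\<Sum>i<n. cnj (uFv i r) * e i k)" by (simp add: mult.commute)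
      thus "D k r = (cmod (\<Sum>i<n. cnj (uFv i r) * e i k))\<^sup>2" unfolding D_def by (metis complex_mod_cnj)
    qed
    also have "\<dots> = (\<Sum>i<n. (cmod (e i k))\<^sup>2)"
    proof (rule parseval, intro allI impI)
      fix i i' assume "i < n" "i' < n"
      thus "(\<Sum>r<n. cnj (uFv i r) * cnj (cnj (uFv i' r))) = (if i = i' then 1 else 0)"
        using uFc unfolding compl_def by (auto simp: mult.commute)
    qed
    also have "\<dots> = 1" by (rule col_norm[OF eo k])
    finally show ?thesis .
  qed
  have Dcol: "(\<Sum>k<n. D k r) = 1" if r: "r < n" for r
  proof -
    have "(\<Sum>k<n. D k r) = (\<Sum>i<n. (cmod (uFv i r))\<^sup>2)"
      unfolding D_def
    proof (rule parseval, intro allI impI)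
      fix i i' assume "i < n" "i' < n"
      thus "(\<Sum>k<n. cnj (e i k) * cnj (cnj (e i' k))) = (if i = i' then 1 else 0)"
        using ec unfolding compl_def by (auto simp: mult.commute)
    qed
    also have "\<dots> = 1" by (rule col_norm[OF uFo r])
    finally show ?thesis .
  qed
  have LB2: "(\<Sum>k<n. xlogx (d k)) \<le> (\<Sum>r<n. xlogx (lF r))"
  proof -
    have "(\<Sum>k<n. xlogx (\<Sum>r<n. D k r * lF r)) \<le> (\<Sum>r<n. xlogx (lF r))"
      by (rule jensen_xlogx) (use lF0 Drow Dcol in \<open>auto simp: D_def\<close>)
    thus ?thesis using dD by simp
  qed
  have LB: "(\<Sum>k<n. xlogx (\<mu> k)) \<le> q * (\<Sum>r<n. xlogx (lF r))"
    using LB1 LB2 q0 by (meson mult_left_mono order_trans)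
  have h2t: "h2 t = - (xlogx t + xlogx (1 - t))" unfolding h2_def xlogx_def using t by simp
  have key: "t * entanglement n m \<Gamma> \<ge> q * entanglement n m \<Phi> - (1 - t) * entanglement n m \<Psi> - h2 t"
    unfolding EG EF EP h2t using UB LB by (simp add: algebra_simps)
  have qt: "q = t * ((1 - t) * (cmod \<beta>)\<^sup>2 / (1 - t * (1 - (cmod \<alpha>)\<^sup>2)))" unfolding q_def by simp
  have "entanglement n m \<Gamma> \<ge> (q * entanglement n m \<Phi> - (1 - t) * entanglement n m \<Psi> - h2 t) / t"
    using key t by (simp add: divide_le_eq mult.commute)
  also have "(q * entanglement n m \<Phi> - (1 - t) * entanglement n m \<Psi> - h2 t) / t =
     (1 - t) * (cmod \<beta>)\<^sup>2 / (1 - t * (1 - (cmod \<alpha>)\<^sup>2)) * entanglement n m \<Phi>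
           - (1 - t) / t * entanglement n m \<Psi> - 1 / t * h2 t"
    unfolding qt using t by (simp add: field_simps)
  finally show ?thesis unfolding \<Gamma>_def .
qed



theorem theorem4:
  fixes dA dB :: nat and \<Psi> \<Phi> :: "complex vec" and \<alpha> \<beta> :: complex and t :: real
  assumes "dim_vec \<Psi> = dA * dB" and "dim_vec \<Phi> = dA * dB"
    and "unit_vec \<Psi>" and "unit_vec \<Phi>"
    and "unit_vec (\<alpha> \<cdot>\<^sub>v \<Psi> + \<beta> \<cdot>\<^sub>v \<Phi>)"
    and "0 < t" and "t < 1"
  shows "entanglement dA dB (\<alpha> \<cdot>\<^sub>v \<Psi> + \<beta> \<cdot>\<^sub>v \<Phi>) \<ge>
    max ((1 - t) * (cmod \<beta>)\<^sup>2 / (1 - t * (1 - (cmod \<alpha>)\<^sup>2)) * entanglement dA dB \<Phi>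
           - (1 - t) / t * entanglement dA dB \<Psi> - 1 / t * h2 t)
        ((1 - t) * (cmod \<alpha>)\<^sup>2 / (1 - t * (1 - (cmod \<beta>)\<^sup>2)) * entanglement dA dB \<Psi>
           - (1 - t) / t * entanglement dA dB \<Phi> - 1 / t * h2 t)"
  proof -
  have L1: "entanglement dA dB (\<alpha> \<cdot>\<^sub>v \<Psi> + \<beta> \<cdot>\<^sub>v \<Phi>) \<ge>
     (1 - t) * (cmod \<beta>)\<^sup>2 / (1 - t * (1 - (cmod \<alpha>)\<^sup>2)) * entanglement dA dB \<Phi>
           - (1 - t) / t * entanglement dA dB \<Psi> - 1 / t * h2 t"
    by (rule main_L1[OF assms])
  have comm: "\<alpha> \<cdot>\<^sub>v \<Psi> + \<beta> \<cdot>\<^sub>v \<Phi> = \<beta> \<cdot>\<^sub>v \<Phi> + \<alpha> \<cdot>\<^sub>v \<Psi>"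
    by (rule comm_add_vec[of _ "dA * dB"]) (use assms(1,2) in \<open>auto intro: carrier_vecI\<close>)
  have L2: "entanglement dA dB (\<beta> \<cdot>\<^sub>v \<Phi> + \<alpha> \<cdot>\<^sub>v \<Psi>) \<ge>
     (1 - t) * (cmod \<alpha>)\<^sup>2 / (1 - t * (1 - (cmod \<beta>)\<^sup>2)) * entanglement dA dB \<Psi>
           - (1 - t) / t * entanglement dA dB \<Phi> - 1 / t * h2 t"
    by (rule main_L1) (use assms comm in auto)
  show ?thesis using L1 L2 comm by simp
qed

end
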